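(* Let $(G,\cdot)$ be a semigroup, $(G,\curlywedge)$ a semilattice on the same set $G$, and $\xi,\delta\subseteq G\times G$ binary relations. Then $(G,\cdot,\curlywedge,\xi,\delta)$ is isomorphic to some transformative $\cap$-semigroup of transformations $(\Phi,\cdot,\cap,\xi_\Phi,\delta_\Phi)$ if and only if all of the following hold: (1) $\xi$ is left regular (i.e. $(u,v)\in\xi\Rightarrow(xu,xv)\in\xi$ for all $x,u,v\in G$) and contains the semilattice order $\zeta$; (2) $\delta$ is a left ideal of $(G,\cdot)$ (i.e. $(x,y)\in\delta\Rightarrow(ux,y)\in\delta$ for all $x,y,u\in G$); (3) for all $x,y,z,u,v\in G$: $x(y\curlywedge z)=xy\curlywedge xz$; \ $x\leqslant y\wedge u\leqslant v\wedge y\downarrow v\Rightarrow u\downarrow x$; \ $x\downarrow y\Rightarrow (x\curlywedge y)u=xu\curlywedge yu$; (4) for every positive integer $n$ and all $x,y\in G$ the following axioms hold: $A_n$: if $\mathfrak{X}_n(x\curlywedge y,\{x\})$ then $x\curlywedge y=x$; $B_n$: if $\mathfrak{X}_n(x\curlywedge y,\{x,y\})$ then $(x,y)\in\xi$; $C_n$: if $\mathfrak{X}_n(xy,\{x\})$ then $(x,y)\in\delta$.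
   Context: Notation on $G$: $x\leqslant y$ iff $x\curlywedge y=x$ (the semilattice order $\zeta$); $x\downarrow y$ iff $(x,y)\in\xi$; $x\vdash y$ iff $(x,y)\in\delta$. $G^*=G\cup\{e\}$ is the semigroup obtained by adjoining a new identity $e\notin G$, with conventions $e\leqslant e$, $e\vdash e$, and $x\vdash e$ for all $x\in G$. The formula $a\boxdot b\leqslant c$ abbreviates $a\vdash b\wedge ab\leqslant c$. For a positive integer $n$, $z\in G$ and $H\subseteq G$, $\mathfrak{X}_n(z,H)$ is the statement: there exist $x_i,y_i,t_i\in G^*$ and $u_i,v_i\in G$ ($1\le i\le 2^n-1$) such that (a) $u_1\downarrow v_1$ and $(u_1\curlywedge v_1)x_1\boxdot y_1\leqslant z t_1$; (b) for every $i$ with $1\le i\le 2^{n-1}-1$: $u_{2i}\downarrow v_{2i}$, $(u_{2i}\curlywedge v_{2i})x_{2i}\boxdot y_{2i}\leqslant u_i t_{2i}$, $u_{2i+1}\downarrow v_{2i+1}$ and $(u_{2i+1}\curlywedge v_{2i+1})x_{2i+1}\boxdot y_{2i+1}\leqslant v_i x_i t_{2i+1}$; (c) for every $i$ with $2^{n-1}\le i\le 2^n-1$: $u_i\in H$ and $v_ix_i\in H$. Transformations: for a nonempty set $A$, a transformation is a partial map $A\to A$ regarded as a subset of $A\times A$, with domain $\mathrm{pr}_1 f$ and image $\mathrm{pr}_2 f$. The product $f\cdot g$ is "first $f$, then $g$": $(f\cdot g)(a)=g(f(a))$, defined exactly when $a\in\mathrm{pr}_1 f$ and $f(a)\in\mathrm{pr}_1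 g$. A transformative $\cap$-semigroup of transformations is $(\Phi,\cdot,\cap,\xi_\Phi,\delta_\Phi)$ where $\Phi$ is a set of transformations of a nonempty set $A$ closed under this product and under set-theoretic intersection, $\xi_\Phi=\{(f,g):f$ and $g$ coincide on $\mathrm{pr}_1 f\cap\mathrm{pr}_1 g\}$, and $\delta_\Phi=\{(f,g):\mathrm{pr}_2 f\subseteq\mathrm{pr}_1 g\}$. *)

theory Defs
  imports Main
begin

definition semigroup_on :: "'a set \<Rightarrow> ('a \<Rightarrow> 'a \<Rightarrow> 'a) \<Rightarrow> bool" where
  "semigroup_on G mult \<longleftrightarrow>
     (\<forall>x\<in>G. \<forall>y\<in>G. mult x y \<in> G) \<and>
     (\<forall>x\<in>G. \<forall>y\<in>G. \<forall>z\<in>G. mult (mult x y) z = mult x (mult y z))"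

definition semilattice_on :: "'a set \<Rightarrow> ('a \<Rightarrow> 'a \<Rightarrow> 'a) \<Rightarrow> bool" where
  "semilattice_on G meet \<longleftrightarrow>
     (\<forall>x\<in>G. \<forall>y\<in>G. meet x y \<in> G) \<and>
     (\<forall>x\<in>G. \<forall>y\<in>G. \<forall>z\<in>G. meet (meet x y) z = meet x (meet y z)) \<and>
     (\<forall>x\<in>G. \<forall>y\<in>G. meet x y = meet y x) \<and>
     (\<forall>x\<in>G. meet x x = x)"

definition sl_le :: "('a \<Rightarrow> 'a \<Rightarrow> 'a) \<Rightarrow> 'a \<Rightarrow> 'a \<Rightarrow> bool" where
  "sl_le meet x y \<longleftrightarrow> meet x y = x"

definition zeta :: "'a set \<Rightarrow> ('a \<Rightarrow> 'a \<Rightarrow> 'a) \<Rightarrow> ('a \<times> 'a) set" where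
  "zeta G meet = {(x, y). x \<in> G \<and> y \<in> G \<and> sl_le meet x y}"

section \<open>The adjoined identity: G* = G \<union> {e}, with e represented by None\<close>

definition Gstar :: "'a set \<Rightarrow> 'a option set" where
  "Gstar G = insert None (Some ` G)"

definition rmul :: "('a \<Rightarrow> 'a \<Rightarrow> 'a) \<Rightarrow> 'a \<Rightarrow> 'a option \<Rightarrow> 'a" where
  "rmul mult a t = (case t of None \<Rightarrow> a | Some s \<Rightarrow> mult a s)"

definition dstar :: "('a \<times> 'a) set \<Rightarrow> 'a \<Rightarrow> 'a option \<Rightarrow> bool" where
  "dstar delta a b = (case b of None \<Rightarrow> True | Some b' \<Rightarrow> (a, b') \<in> delta)"

text \<open>a \<boxdot> b \<le> c abbreviates a \<turnstile> b \<and> ab \<le> c.\<close>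
definition boxdot_le ::
  "('a \<Rightarrow> 'a \<Rightarrow> 'a) \<Rightarrow> ('a \<Rightarrow> 'a \<Rightarrow> 'a) \<Rightarrow> ('a \<times> 'a) set \<Rightarrow> 'a \<Rightarrow> 'a option \<Rightarrow> 'a \<Rightarrow> bool" where
  "boxdot_le mult meet delta a b c \<longleftrightarrow> dstar delta a b \<and> sl_le meet (rmul mult a b) c"

definition XX ::
  "'a set \<Rightarrow> ('a \<Rightarrow> 'a \<Rightarrow> 'a) \<Rightarrow> ('a \<Rightarrow> 'a \<Rightarrow> 'a) \<Rightarrow> ('a \<times> 'a) set \<Rightarrow> ('a \<times> 'a) set
     \<Rightarrow> nat \<Rightarrow> 'a \<Rightarrow> 'a set \<Rightarrow> bool" where
  "XX G mult meet xi delta n z H \<longleftrightarrow>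
    (\<exists>(x :: nat \<Rightarrow> 'a option) (y :: nat \<Rightarrow> 'a option) (t :: nat \<Rightarrow> 'a option)
       (u :: nat \<Rightarrow> 'a) (v :: nat \<Rightarrow> 'a).
       (\<forall>i\<in>{1..2^n - 1}. x i \<in> Gstar G \<and> y i \<in> Gstar G \<and> t i \<in> Gstar G \<and> u i \<in> G \<and> v i \<in> G) \<and>
       (u 1, v 1) \<in> xi \<and>
       boxdot_le mult meet delta (rmul mult (meet (u 1) (v 1)) (x 1)) (y 1) (rmul mult z (t 1)) \<and>
       (\<forall>i\<in>{1..2^(n-1) - 1}.
          (u (2*i), v (2*i)) \<in> xi \<and>
          boxdot_le mult meet delta (rmul mult (meet (u (2*i)) (v (2*i))) (x (2*i))) (y (2*i))
            (rmul mult (u i) (t (2*i))) \<and>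
          (u (2*i+1), v (2*i+1)) \<in> xi \<and>
          boxdot_le mult meet delta (rmul mult (meet (u (2*i+1)) (v (2*i+1))) (x (2*i+1))) (y (2*i+1))
            (rmul mult (rmul mult (v i) (x i)) (t (2*i+1)))) \<and>
       (\<forall>i\<in>{2^(n-1)..2^n - 1}. u i \<in> H \<and> rmul mult (v i) (x i) \<in> H))"

definition axioms_1_to_4 ::
  "'a set \<Rightarrow> ('a \<Rightarrow> 'a \<Rightarrow> 'a) \<Rightarrow> ('a \<Rightarrow> 'a \<Rightarrow> 'a) \<Rightarrow> ('a \<times> 'a) set \<Rightarrow> ('a \<times> 'a) set \<Rightarrow> bool" where
  "axioms_1_to_4 G mult meet xi delta \<longleftrightarrow>
     \<comment> \<open>(1)\<close>
     (\<forall>x\<in>G. \<forall>u\<in>G. \<forall>v\<in>G. (u, v) \<in> xi \<longrightarrow> (mult x u, mult x v) \<in> xi) \<and>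
     zeta G meet \<subseteq> xi \<and>
     \<comment> \<open>(2)\<close>
     (\<forall>x\<in>G. \<forall>y\<in>G. \<forall>u\<in>G. (x, y) \<in> delta \<longrightarrow> (mult u x, y) \<in> delta) \<and>
     \<comment> \<open>(3)\<close>
     (\<forall>x\<in>G. \<forall>y\<in>G. \<forall>z\<in>G. mult x (meet y z) = meet (mult x y) (mult x z)) \<and>
     (\<forall>x\<in>G. \<forall>y\<in>G. \<forall>u\<in>G. \<forall>v\<in>G.
        sl_le meet x y \<and> sl_le meet u v \<and> (y, v) \<in> xi \<longrightarrow> (u, x) \<in> xi) \<and>
     (\<forall>x\<in>G. \<forall>y\<in>G. \<forall>u\<in>G. (x, y) \<in> xi \<longrightarrow> mult (meet x y) u = meet (mult x u) (mult y u)) \<and>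
     \<comment> \<open>(4): axioms A_n, B_n, C_n\<close>
     (\<forall>n::nat. n \<ge> 1 \<longrightarrow> (\<forall>x\<in>G. \<forall>y\<in>G.
        (XX G mult meet xi delta n (meet x y) {x} \<longrightarrow> meet x y = x) \<and>
        (XX G mult meet xi delta n (meet x y) {x, y} \<longrightarrow> (x, y) \<in> xi) \<and>
        (XX G mult meet xi delta n (mult x y) {x} \<longrightarrow> (x, y) \<in> delta)))"

text \<open>A transformation of A: a partial map A \<rightarrow> A, viewed as a subset of A \<times> A.
  Product f\<cdot>g ("first f, then g") is relational composition f O g;
  pr1 = Domain, pr2 = Range.\<close>
definition transformation :: "'b set \<Rightarrow> ('b \<times> 'b) set \<Rightarrow> bool" where
  "transformation A f \<longleftrightarrow> f \<subseteq> A \<times> A \<and> single_valued f"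

definition cap_semigroup_of_transformations :: "'b set \<Rightarrow> ('b \<times> 'b) set set \<Rightarrow> bool" where
  "cap_semigroup_of_transformations A \<Phi> \<longleftrightarrow>
     A \<noteq> {} \<and> (\<forall>f\<in>\<Phi>. transformation A f) \<and>
     (\<forall>f\<in>\<Phi>. \<forall>g\<in>\<Phi>. f O g \<in> \<Phi> \<and> f \<inter> g \<in> \<Phi>)"

definition xi_Phi :: "('b \<times> 'b) set set \<Rightarrow> (('b \<times> 'b) set \<times> ('b \<times> 'b) set) set" where
  "xi_Phi \<Phi> = {(f, g). f \<in> \<Phi> \<and> g \<in> \<Phi> \<and>
     (\<forall>a \<in> Domain f \<inter> Domain g. \<forall>b c. (a, b) \<in> f \<longrightarrow> (a, c) \<in> g \<longrightarrow> b = c)}"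

definition delta_Phi :: "('b \<times> 'b) set set \<Rightarrow> (('b \<times> 'b) set \<times> ('b \<times> 'b) set) set" where
  "delta_Phi \<Phi> = {(f, g). f \<in> \<Phi> \<and> g \<in> \<Phi> \<and> Range f \<subseteq> Domain g}"

definition is_iso_to_transformative ::
  "'a set \<Rightarrow> ('a \<Rightarrow> 'a \<Rightarrow> 'a) \<Rightarrow> ('a \<Rightarrow> 'a \<Rightarrow> 'a) \<Rightarrow> ('a \<times> 'a) set \<Rightarrow> ('a \<times> 'a) set
     \<Rightarrow> 'b set \<Rightarrow> ('b \<times> 'b) set set \<Rightarrow> ('a \<Rightarrow> ('b \<times> 'b) set) \<Rightarrow> bool" where
  "is_iso_to_transformative G mult meet xi delta A \<Phi> h \<longleftrightarrow>
     cap_semigroup_of_transformations A \<Phi> \<and> bij_betw h G \<Phi> \<and>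
     (\<forall>x\<in>G. \<forall>y\<in>G.
        h (mult x y) = h x O h y \<and>
        h (meet x y) = h x \<inter> h y \<and>
        ((x, y) \<in> xi \<longleftrightarrow> (h x, h y) \<in> xi_Phi \<Phi>) \<and>
        ((x, y) \<in> delta \<longleftrightarrow> (h x, h y) \<in> delta_Phi \<Phi>))"

end

theory Submission
  imports Defs
begin

locale alg =
  fixes G :: "'a set" and mult meet :: "'a \<Rightarrow> 'a \<Rightarrow> 'a" and xi delta :: "('a \<times> 'a) set"
  assumes sg: "semigroup_on G mult" and sl: "semilattice_on G meet"
    and xiG: "xi \<subseteq> G \<times> G" and dG: "delta \<subseteq> G \<times> G"
begin

lemma mult_closed[simp]: "x \<in> G \<Longrightarrow> y \<in> G \<Longrightarrow> mult x y \<in> G"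
  using sg unfolding semigroup_on_def by blast
lemma mult_assoc: "x \<in> G \<Longrightarrow> y \<in> G \<Longrightarrow> z \<in> G \<Longrightarrow> mult (mult x y) z = mult x (mult y z)"
  using sg unfolding semigroup_on_def by blast
lemma meet_closed[simp]: "x \<in> G \<Longrightarrow> y \<in> G \<Longrightarrow> meet x y \<in> G"
  using sl unfolding semilattice_on_def by blast
lemma meet_assoc: "x \<in> G \<Longrightarrow> y \<in> G \<Longrightarrow> z \<in> G \<Longrightarrow> meet (meet x y) z = meet x (meet y z)"
  using sl unfolding semilattice_on_def by blast
lemma meet_comm: "x \<in> G \<Longrightarrow> y \<in> G \<Longrightarrow> meet x y = meet y x"
  using sl unfolding semilattice_on_def by blast
lemma meet_idem[simp]: "x \<in> G \<Longrightarrow> meet x x = x"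
  using sl unfolding semilattice_on_def by blast

lemma rmul_closed[simp]: "w \<in> G \<Longrightarrow> t \<in> Gstar G \<Longrightarrow> rmul mult w t \<in> G"
  by (auto simp: rmul_def Gstar_def)

lemma sound:
  assumes iso: "is_iso_to_transformative G mult meet xi delta A \<Phi> h"
  shows "axioms_1_to_4 G mult meet xi delta"
proof -
  have cs: "cap_semigroup_of_transformations A \<Phi>" and bij: "bij_betw h G \<Phi>"
    and hom: "\<forall>x\<in>G. \<forall>y\<in>G.
        h (mult x y) = h x O h y \<and>
        h (meet x y) = h x \<inter> h y \<and>
        ((x, y) \<in> xi \<longleftrightarrow> (h x, h y) \<in> xi_Phi \<Phi>) \<and>
        ((x, y) \<in> delta \<longleftrightarrow> (h x, h y) \<in> delta_Phi \<Phi>)"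
    using iso unfolding is_iso_to_transformative_def by auto
  have hm: "\<And>x y. x\<in>G \<Longrightarrow> y\<in>G \<Longrightarrow> h (mult x y) = h x O h y" using hom by blast
  have hi: "\<And>x y. x\<in>G \<Longrightarrow> y\<in>G \<Longrightarrow> h (meet x y) = h x \<inter> h y" using hom by blast
  have inj: "\<And>x y. x\<in>G \<Longrightarrow> y\<in>G \<Longrightarrow> h x = h y \<Longrightarrow> x = y"
    using bij unfolding bij_betw_def inj_on_def by blast
  have hPhi: "\<And>x. x\<in>G \<Longrightarrow> h x \<in> \<Phi>" using bij unfolding bij_betw_def by blast
  have sv: "\<And>x. x\<in>G \<Longrightarrow> single_valued (h x)"
    using cs hPhi unfolding cap_semigroup_of_transformations_def transformation_def by blast
  have xiP: "\<And>x y. x\<in>G \<Longrightarrow> y\<in>G \<Longrightarrow> (x,y)\<in>xi \<longleftrightarrow> (\<forall>a b c. (a,b)\<in>h x \<longrightarrow> (a,c)\<in>h y \<longrightarrow> b=c)"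
  proof -
    fix x y assume xy: "x\<in>G" "y\<in>G"
    have "(x,y)\<in>xi \<longleftrightarrow> (h x, h y) \<in> xi_Phi \<Phi>" using hom xy by blast
    also have "\<dots> \<longleftrightarrow> (\<forall>a b c. (a,b)\<in>h x \<longrightarrow> (a,c)\<in>h y \<longrightarrow> b=c)"
      unfolding xi_Phi_def using hPhi xy by blast
    finally show "(x,y)\<in>xi \<longleftrightarrow> (\<forall>a b c. (a,b)\<in>h x \<longrightarrow> (a,c)\<in>h y \<longrightarrow> b=c)" .
  qed
  have dP: "\<And>x y. x\<in>G \<Longrightarrow> y\<in>G \<Longrightarrow> (x,y)\<in>delta \<longleftrightarrow> Range (h x) \<subseteq> Domain (h y)"
  proof -
    fix x y assume xy: "x\<in>G" "y\<in>G"
    have "(x,y)\<in>delta \<longleftrightarrow> (h x, h y) \<in> delta_Phi \<Phi>" using hom xy by blast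
    then show "(x,y)\<in>delta \<longleftrightarrow> Range (h x) \<subseteq> Domain (h y)"
      unfolding delta_Phi_def using hPhi xy by blast
  qed
  have le: "\<And>x y. x\<in>G \<Longrightarrow> y\<in>G \<Longrightarrow> sl_le meet x y \<longleftrightarrow> h x \<subseteq> h y"
  proof -
    fix x y assume xy: "x\<in>G" "y\<in>G"
    show "sl_le meet x y \<longleftrightarrow> h x \<subseteq> h y"
      unfolding sl_le_def
    proof
      assume "meet x y = x" then show "h x \<subseteq> h y" using hi[OF xy] by (metis Int_lower2)
    next
      assume "h x \<subseteq> h y" then have "h (meet x y) = h x" using hi[OF xy] by blast
      then show "meet x y = x" using inj[of "meet x y" x] xy by simp
    qed
  qed
  define hs where "hs t = (case t of None \<Rightarrow> Id | Some s \<Rightarrow> h s)" for t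
  have hr: "\<And>w t. w\<in>G \<Longrightarrow> t\<in>Gstar G \<Longrightarrow> h (rmul mult w t) = h w O hs t"
    by (auto simp: rmul_def hs_def Gstar_def hm)
  have domr: "\<And>w t a. w\<in>G \<Longrightarrow> t\<in>Gstar G \<Longrightarrow> a \<in> Domain (h (rmul mult w t)) \<Longrightarrow> a \<in> Domain (h w)"
    using hr by blast
  have node: "a \<in> Domain (h (rmul mult W T))"
    if "U\<in>G" "V\<in>G" "W\<in>G" "X\<in>Gstar G" "Y\<in>Gstar G" "T\<in>Gstar G" "(U,V)\<in>xi"
      "boxdot_le mult meet delta (rmul mult (meet U V) X) Y (rmul mult W T)"
      "a \<in> Domain (h U)" "a \<in> Domain (h (rmul mult V X))" for U V W X Y T a
  proof -
    let ?P = "rmul mult (meet U V) X"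
    have PG: "?P \<in> G" using that by simp
    from that(10) hr[OF that(2) that(4)] obtain b c where ab: "(a,b)\<in>h V" and bc: "(b,c)\<in>hs X" by blast
    from that(9) obtain b' where ab': "(a,b')\<in>h U" by blast
    have "b' = b" using xiP[OF that(1,2)] that(7) ab ab' by blast
    then have "(a,b) \<in> h (meet U V)" using hi[OF that(1,2)] ab ab' by simp
    then have ac: "(a,c) \<in> h ?P" using hr[of "meet U V" X] that bc by auto
    have "a \<in> Domain (h (rmul mult ?P Y))"
    proof (cases Y)
      case None then show ?thesis using ac hr[OF PG that(5)] by (auto simp: hs_def)
    next
      case (Some y)
      then have yG: "y\<in>G" using that(5) by (auto simp: Gstar_def)
      have "(?P, y) \<in> delta" using that(8) Some unfolding boxdot_le_def dstar_def by simp
      then have "c \<in> Domain (h y)" using dP[OF PG yG] ac by blast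
      then show ?thesis using ac hr[OF PG that(5)] Some by (auto simp: hs_def)
    qed
    moreover have "h (rmul mult ?P Y) \<subseteq> h (rmul mult W T)"
      using le[of "rmul mult ?P Y" "rmul mult W T"] that unfolding boxdot_le_def by simp
    ultimately show ?thesis by blast
  qed
  have XXsound: "a \<in> Domain (h z)"
    if xx: "XX G mult meet xi delta n z H" and n: "n \<ge> 1" and zG: "z \<in> G" and HG: "H \<subseteq> G"
      and aH: "\<forall>w\<in>H. a \<in> Domain (h w)" for n z H a
  proof -
    from xx obtain x y t :: "nat \<Rightarrow> 'a option" and u v :: "nat \<Rightarrow> 'a" where
      mem: "\<forall>i\<in>{1..2^n - 1}. x i \<in> Gstar G \<and> y i \<in> Gstar G \<and> t i \<in> Gstar G \<and> u i \<in> G \<and> v i \<in> G"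
      and r1: "(u 1, v 1) \<in> xi"
      and r2: "boxdot_le mult meet delta (rmul mult (meet (u 1) (v 1)) (x 1)) (y 1) (rmul mult z (t 1))"
      and int: "\<forall>i\<in>{1..2^(n-1) - 1}.
          (u (2*i), v (2*i)) \<in> xi \<and>
          boxdot_le mult meet delta (rmul mult (meet (u (2*i)) (v (2*i))) (x (2*i))) (y (2*i))
            (rmul mult (u i) (t (2*i))) \<and>
          (u (2*i+1), v (2*i+1)) \<in> xi \<and>
          boxdot_le mult meet delta (rmul mult (meet (u (2*i+1)) (v (2*i+1))) (x (2*i+1))) (y (2*i+1))
            (rmul mult (rmul mult (v i) (x i)) (t (2*i+1)))"
      and lv: "\<forall>i\<in>{2^(n-1)..2^n - 1}. u i \<in> H \<and> rmul mult (v i) (x i) \<in> H"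
      unfolding XX_def by blast
    have pow: "(2::nat)^n = 2 * 2^(n-1)" using n by (metis Suc_diff_le diff_Suc_1 power_Suc)
    have P: "\<forall>i. 2^n - i = k \<longrightarrow> i \<in> {1..2^n - 1} \<longrightarrow> a \<in> Domain (h (u i)) \<and> a \<in> Domain (h (rmul mult (v i) (x i)))" for k
    proof (induction k rule: less_induct)
      case (less k)
      show ?case
      proof (intro allI impI)
        fix i assume ik: "2^n - i = k" and i: "i \<in> {1..2^n - 1}"
        show "a \<in> Domain (h (u i)) \<and> a \<in> Domain (h (rmul mult (v i) (x i)))"
        proof (cases "i \<ge> 2^(n-1)")
          case True
          then show ?thesis using lv i aH by auto
        next
          case False
          then have iint: "i \<in> {1..2^(n-1) - 1}" using i by auto
          have c1: "2*i \<in> {1..2^n - 1}" "2*i+1 \<in> {1..2^n - 1}" using False i pow by auto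
          have "a \<in> Domain (h (u (2*i))) \<and> a \<in> Domain (h (rmul mult (v (2*i)) (x (2*i))))"
            using less.IH[of "2^n - 2*i"] c1 ik i by auto
          moreover have "a \<in> Domain (h (u (2*i+1))) \<and> a \<in> Domain (h (rmul mult (v (2*i+1)) (x (2*i+1))))"
            using less.IH[of "2^n - (2*i+1)"] c1 ik i by auto
          moreover note m1 = mem[rule_format, OF c1(1)] and m2 = mem[rule_format, OF c1(2)]
            and m0 = mem[rule_format, OF i] and ii = int[rule_format, OF iint]
          ultimately have "a \<in> Domain (h (rmul mult (u i) (t (2*i))))"
            and "a \<in> Domain (h (rmul mult (rmul mult (v i) (x i)) (t (2*i+1))))"
            using node by (meson rmul_closed)+
          then show ?thesis using domr m0 m1 m2 by (meson rmul_closed)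
        qed
      qed
    qed
    have p2: "(2::nat) \<le> 2^n" using n by (simp add: self_le_power)
    have one: "1 \<in> {1..2^n - 1::nat}" using p2 by auto
    have "a \<in> Domain (h (u 1)) \<and> a \<in> Domain (h (rmul mult (v 1) (x 1)))"
      using P one by blast
    then have "a \<in> Domain (h (rmul mult z (t 1)))"
      using node[of "u 1" "v 1" z "x 1" "y 1" "t 1" a] mem one r1 r2 zG by blast
    then show ?thesis using domr zG mem one by blast
  qed
  show ?thesis
    unfolding axioms_1_to_4_def
  proof (intro conjI)
    show "\<forall>x\<in>G. \<forall>u\<in>G. \<forall>v\<in>G. (u, v) \<in> xi \<longrightarrow> (mult x u, mult x v) \<in> xi"
    proof (intro ballI impI)
      fix x u v assume G: "x\<in>G" "u\<in>G" "v\<in>G" and uv: "(u,v)\<in>xi"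
      show "(mult x u, mult x v) \<in> xi"
        using xiP[OF G(2,3)] uv xiP[of "mult x u" "mult x v"] G hm
        by (smt (verit, ccfv_threshold) mult_closed relcomp.cases relcomp.relcompI sv single_valued_def)
    qed
    show "zeta G meet \<subseteq> xi"
    proof
      fix p assume "p \<in> zeta G meet"
      then obtain x y where p: "p = (x,y)" "x\<in>G" "y\<in>G" "sl_le meet x y" unfolding zeta_def by blast
      then have "h x \<subseteq> h y" using le by blast
      then show "p \<in> xi" using xiP[of x y] p sv[of y] unfolding single_valued_def by blast
    qed
    show "\<forall>x\<in>G. \<forall>y\<in>G. \<forall>u\<in>G. (x, y) \<in> delta \<longrightarrow> (mult u x, y) \<in> delta"
      using dP hm by (smt (verit, del_insts) Range_iff mult_closed relcomp.cases subset_iff)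
    show "\<forall>x\<in>G. \<forall>y\<in>G. \<forall>z\<in>G. mult x (meet y z) = meet (mult x y) (mult x z)"
    proof (intro ballI)
      fix x y z assume G: "x\<in>G" "y\<in>G" "z\<in>G"
      have "h x O (h y \<inter> h z) = (h x O h y) \<inter> (h x O h z)"
        using sv[OF G(1)] unfolding single_valued_def by blast
      then have "h (mult x (meet y z)) = h (meet (mult x y) (mult x z))"
        using G hm hi by simp
      then show "mult x (meet y z) = meet (mult x y) (mult x z)" using inj G by simp
    qed
    show "\<forall>x\<in>G. \<forall>y\<in>G. \<forall>u\<in>G. \<forall>v\<in>G.
        sl_le meet x y \<and> sl_le meet u v \<and> (y, v) \<in> xi \<longrightarrow> (u, x) \<in> xi"
    proof (intro ballI impI)
      fix x y u v assume G: "x\<in>G" "y\<in>G" "u\<in>G" "v\<in>G"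
        and c: "sl_le meet x y \<and> sl_le meet u v \<and> (y, v) \<in> xi"
      then have "h x \<subseteq> h y" "h u \<subseteq> h v" using le by auto
      then show "(u,x)\<in>xi" using xiP[of y v] xiP[of u x] G c by blast
    qed
    show "\<forall>x\<in>G. \<forall>y\<in>G. \<forall>u\<in>G. (x, y) \<in> xi \<longrightarrow> mult (meet x y) u = meet (mult x u) (mult y u)"
    proof (intro ballI impI)
      fix x y u assume G: "x\<in>G" "y\<in>G" "u\<in>G" and c: "(x,y)\<in>xi"
      have "(h x \<inter> h y) O h u = (h x O h u) \<inter> (h y O h u)"
        using xiP[OF G(1,2)] c by blast
      then have "h (mult (meet x y) u) = h (meet (mult x u) (mult y u))"
        using G hm hi by simp
      then show "mult (meet x y) u = meet (mult x u) (mult y u)" using inj G by simp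
    qed
    show "\<forall>n::nat. n \<ge> 1 \<longrightarrow> (\<forall>x\<in>G. \<forall>y\<in>G.
        (XX G mult meet xi delta n (meet x y) {x} \<longrightarrow> meet x y = x) \<and>
        (XX G mult meet xi delta n (meet x y) {x, y} \<longrightarrow> (x, y) \<in> xi) \<and>
        (XX G mult meet xi delta n (mult x y) {x} \<longrightarrow> (x, y) \<in> delta))"
    proof (intro allI impI ballI conjI)
      fix n :: nat and x y assume n: "n \<ge> 1" and G: "x\<in>G" "y\<in>G"
      show "meet x y = x" if "XX G mult meet xi delta n (meet x y) {x}"
      proof -
        have "Domain (h x) \<subseteq> Domain (h (meet x y))"
          using XXsound[OF that n] G by auto
        have "h x \<subseteq> h y"
        proof
          fix p assume p: "p \<in> h x"
          obtain a b where ab: "p = (a,b)" by (cases p)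
          with p have "a \<in> Domain (h (meet x y))" using \<open>Domain (h x) \<subseteq> Domain (h (meet x y))\<close> by blast
          then obtain c where "(a,c) \<in> h x" "(a,c) \<in> h y" using hi[OF G] by blast
          moreover have "(a,b) \<in> h x" using p ab by simp
          ultimately show "p \<in> h y" using sv[OF G(1)] ab unfolding single_valued_def by metis
        qed
        then show ?thesis using le G unfolding sl_le_def by blast
      qed
      show "(x,y)\<in>xi" if "XX G mult meet xi delta n (meet x y) {x,y}"
      proof -
        have "Domain (h x) \<inter> Domain (h y) \<subseteq> Domain (h (meet x y))"
          using XXsound[OF that n] G by auto
        then have "\<forall>a b c. (a,b)\<in>h x \<longrightarrow> (a,c)\<in>h y \<longrightarrow> b=c"
          using hi[OF G] sv[OF G(1)] sv[OF G(2)] unfolding single_valued_def by blast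
        then show ?thesis using xiP[OF G] by simp
      qed
      show "(x,y)\<in>delta" if "XX G mult meet xi delta n (mult x y) {x}"
      proof -
        have "Domain (h x) \<subseteq> Domain (h (mult x y))"
          using XXsound[OF that n] G by auto
        then have "Range (h x) \<subseteq> Domain (h y)"
          using hm[OF G] sv[OF G(1)] unfolding single_valued_def by blast
        then show ?thesis using dP[OF G] by simp
      qed
    qed
  qed
qed

end


function sub :: "nat \<Rightarrow> nat" where
  "sub i = (if i \<le> 3 then 1 else 2 * sub (i div 2) + i mod 2)"
  by auto
termination by (relation "measure id") auto

function isR :: "nat \<Rightarrow> bool" where
  "isR i = (if i \<le> 3 then i = 3 else isR (i div 2))"
  by auto
termination by (relation "measure id") auto

declare sub.simps[simp del] isR.simps[simp del]

lemma sub_ge1: "1 \<le> sub i"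
  by (induction i rule: sub.induct) (subst sub.simps, auto)

lemma sub_2: "sub 2 = 1" "sub 3 = 1" "isR 2 = False" "isR 3 = True"
  by (subst sub.simps isR.simps, simp)+

lemma sub_dbl: "2 \<le> i \<Longrightarrow> sub (2*i) = 2 * sub i \<and> sub (2*i+1) = 2 * sub i + 1
   \<and> isR (2*i) = isR i \<and> isR (2*i+1) = isR i"
  using sub.simps[of "2*i"] sub.simps[of "2*i+1"] isR.simps[of "2*i"] isR.simps[of "2*i+1"] by simp

lemma sub_dbl': assumes "2 \<le> i" shows "sub (2*i) = 2 * sub i" "sub (Suc (2*i)) = Suc (2 * sub i)"
   "isR (2*i) = isR i" "isR (Suc (2*i)) = isR i"
  using sub_dbl[OF assms] by auto

lemma sub_upper: "2 \<le> i \<Longrightarrow> i < 2^(Suc m) \<Longrightarrow> sub i < 2^m"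
proof (induction i arbitrary: m rule: less_induct)
  case (less i)
  show ?case
  proof (cases "i \<le> 3")
    case True
    then have "m \<noteq> 0" using less.prems by (cases m) auto
    then have "(2::nat) \<le> 2^m" by (simp add: self_le_power)
    then show ?thesis using True by (subst sub.simps) simp
  next
    case False
    then obtain m' where m: "m = Suc m'" using less.prems by (cases m) auto
    have "i div 2 < 2^(Suc m')" using less.prems m by auto
    then have "sub (i div 2) < 2^m'" using less.IH[of "i div 2" m'] False by auto
    then show ?thesis using False m by (subst sub.simps) auto
  qed
qed

lemma sub_lower: "2 \<le> i \<Longrightarrow> 2^(Suc m) \<le> i \<Longrightarrow> 2^m \<le> sub i"
proof (induction i arbitrary: m rule: less_induct)
  case (less i)
  show ?case
  proof (cases m)
    case 0 then show ?thesis using sub_ge1 by simp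
  next
    case (Suc m')
    have "(4::nat) \<le> 2^(Suc (Suc m'))" using one_le_power[of 2 m'] by simp
    then have F: "\<not> i \<le> 3" using order_trans[OF \<open>4 \<le> _\<close>] less.prems(2) Suc by fastforce
    have "2 * 2^(Suc m') \<le> i" using less.prems Suc by simp
    then have "2^(Suc m') \<le> i div 2" by linarith
    then have "2^m' \<le> sub (i div 2)" using less.IH[of "i div 2" m'] F by auto
    then show ?thesis using F Suc by (subst sub.simps) auto
  qed
qed

definition comb :: "'x \<Rightarrow> (nat \<Rightarrow> 'x) \<Rightarrow> (nat \<Rightarrow> 'x) \<Rightarrow> nat \<Rightarrow> 'x" where
  "comb a f g i = (if i = 1 then a else if isR i then g (sub i) else f (sub i))"

lemma comb_simps: "comb a f g 1 = a" "comb a f g (Suc 0) = a" "comb a f g 2 = f 1" "comb a f g 3 = g 1"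
  "2 \<le> i \<Longrightarrow> comb a f g i = (if isR i then g (sub i) else f (sub i))"
  "2 \<le> i \<Longrightarrow> comb a f g (2*i) = (if isR i then g (2*sub i) else f (2*sub i))"
  "2 \<le> i \<Longrightarrow> comb a f g (2*i+1) = (if isR i then g (2*sub i+1) else f (2*sub i+1))"
  unfolding comb_def using sub_2 sub_dbl by auto

lemma graft:
  assumes n: "n \<ge> 1"
    and X1: "XX G mult meet xi delta n u0 H" and X2: "XX G mult meet xi delta n (rmul mult v0 x0) H"
    and G0: "u0 \<in> G" "v0 \<in> G" "x0 \<in> Gstar G" "y0 \<in> Gstar G" "t0 \<in> Gstar G"
    and r0: "(u0,v0) \<in> xi"
    and b0: "boxdot_le mult meet delta (rmul mult (meet u0 v0) x0) y0 (rmul mult z t0)"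
  shows "XX G mult meet xi delta (Suc n) z H"
proof -
  from X1 obtain x1 y1 t1 :: "nat \<Rightarrow> 'a option" and u1 v1 :: "nat \<Rightarrow> 'a" where
      mem1: "\<forall>i\<in>{1..2^n - 1}. x1 i \<in> Gstar G \<and> y1 i \<in> Gstar G \<and> t1 i \<in> Gstar G \<and> u1 i \<in> G \<and> v1 i \<in> G"
      and ra1: "(u1 1, v1 1) \<in> xi"
      and rb1: "boxdot_le mult meet delta (rmul mult (meet (u1 1) (v1 1)) (x1 1)) (y1 1) (rmul mult u0 (t1 1))"
      and int1: "\<forall>i\<in>{1..2^(n-1) - 1}.
          (u1 (2*i), v1 (2*i)) \<in> xi \<and>
          boxdot_le mult meet delta (rmul mult (meet (u1 (2*i)) (v1 (2*i))) (x1 (2*i))) (y1 (2*i))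
            (rmul mult (u1 i) (t1 (2*i))) \<and>
          (u1 (2*i+1), v1 (2*i+1)) \<in> xi \<and>
          boxdot_le mult meet delta (rmul mult (meet (u1 (2*i+1)) (v1 (2*i+1))) (x1 (2*i+1))) (y1 (2*i+1))
            (rmul mult (rmul mult (v1 i) (x1 i)) (t1 (2*i+1)))"
      and lv1: "\<forall>i\<in>{2^(n-1)..2^n - 1}. u1 i \<in> H \<and> rmul mult (v1 i) (x1 i) \<in> H"
      unfolding XX_def by blast
  from X2 obtain x2 y2 t2 :: "nat \<Rightarrow> 'a option" and u2 v2 :: "nat \<Rightarrow> 'a" where
      mem2: "\<forall>i\<in>{1..2^n - 1}. x2 i \<in> Gstar G \<and> y2 i \<in> Gstar G \<and> t2 i \<in> Gstar G \<and> u2 i \<in> G \<and> v2 i \<in> G"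
      and ra2: "(u2 1, v2 1) \<in> xi"
      and rb2: "boxdot_le mult meet delta (rmul mult (meet (u2 1) (v2 1)) (x2 1)) (y2 1) (rmul mult (rmul mult v0 x0) (t2 1))"
      and int2: "\<forall>i\<in>{1..2^(n-1) - 1}.
          (u2 (2*i), v2 (2*i)) \<in> xi \<and>
          boxdot_le mult meet delta (rmul mult (meet (u2 (2*i)) (v2 (2*i))) (x2 (2*i))) (y2 (2*i))
            (rmul mult (u2 i) (t2 (2*i))) \<and>
          (u2 (2*i+1), v2 (2*i+1)) \<in> xi \<and>
          boxdot_le mult meet delta (rmul mult (meet (u2 (2*i+1)) (v2 (2*i+1))) (x2 (2*i+1))) (y2 (2*i+1))
            (rmul mult (rmul mult (v2 i) (x2 i)) (t2 (2*i+1)))"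
      and lv2: "\<forall>i\<in>{2^(n-1)..2^n - 1}. u2 i \<in> H \<and> rmul mult (v2 i) (x2 i) \<in> H"
      unfolding XX_def by blast
  define X where "X = comb x0 x1 x2"
  define Y where "Y = comb y0 y1 y2"
  define T where "T = comb t0 t1 t2"
  define U where "U = comb u0 u1 u2"
  define V where "V = comb v0 v1 v2"
  have pow: "(2::nat)^n = 2 * 2^(n-1)" using n by (metis Suc_diff_le diff_Suc_1 power_Suc)
  have p1: "(1::nat) \<le> 2^(n-1)" by simp
  have subrange: "sub i \<in> {1..2^n - 1}" if "i \<in> {2..2^(Suc n) - 1}" for i
  proof -
    have a: "0 < (2::nat)^(Suc n)" by (simp del: power_Suc)
    have b: "2 \<le> i" "i < 2^(Suc n)" using that a by (simp_all del: power_Suc, linarith)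
    have "sub i < 2^n" using sub_upper[of i n] b by simp
    then show ?thesis using sub_ge1[of i] by simp
  qed
  have mem: "\<forall>i\<in>{1..2^(Suc n) - 1}. X i \<in> Gstar G \<and> Y i \<in> Gstar G \<and> T i \<in> Gstar G \<and> U i \<in> G \<and> V i \<in> G"
  proof
    fix i :: nat assume i: "i \<in> {1..2^(Suc n) - 1}"
    show "X i \<in> Gstar G \<and> Y i \<in> Gstar G \<and> T i \<in> Gstar G \<and> U i \<in> G \<and> V i \<in> G"
    proof (cases "i = 1")
      case True then show ?thesis using G0 by (simp add: X_def Y_def T_def U_def V_def comb_simps)
    next
      case False
      then have i2: "i \<in> {2..2^(Suc n) - 1}" "2 \<le> i" using i by auto
      show ?thesis using mem1 mem2 subrange[OF i2(1)] i2(2)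
        by (simp add: X_def Y_def T_def U_def V_def comb_simps)
    qed
  qed
  have int: "\<forall>i\<in>{1..2^(Suc n - 1) - 1}.
          (U (2*i), V (2*i)) \<in> xi \<and>
          boxdot_le mult meet delta (rmul mult (meet (U (2*i)) (V (2*i))) (X (2*i))) (Y (2*i))
            (rmul mult (U i) (T (2*i))) \<and>
          (U (2*i+1), V (2*i+1)) \<in> xi \<and>
          boxdot_le mult meet delta (rmul mult (meet (U (2*i+1)) (V (2*i+1))) (X (2*i+1))) (Y (2*i+1))
            (rmul mult (rmul mult (V i) (X i)) (T (2*i+1)))"
  proof
    fix i :: nat assume i: "i \<in> {1..2^(Suc n - 1) - 1}"
    show "(U (2*i), V (2*i)) \<in> xi \<and>
          boxdot_le mult meet delta (rmul mult (meet (U (2*i)) (V (2*i))) (X (2*i))) (Y (2*i))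
            (rmul mult (U i) (T (2*i))) \<and>
          (U (2*i+1), V (2*i+1)) \<in> xi \<and>
          boxdot_le mult meet delta (rmul mult (meet (U (2*i+1)) (V (2*i+1))) (X (2*i+1))) (Y (2*i+1))
            (rmul mult (rmul mult (V i) (X i)) (T (2*i+1)))"
    proof (cases "i = 1")
      case True
      then show ?thesis using ra1 rb1 ra2 rb2
        by (simp add: X_def Y_def T_def U_def V_def comb_simps)
    next
      case False
      then have i2: "2 \<le> i" "i < 2^n" using i by auto
      have "sub i < 2^(n-1)" using sub_upper[of i "n-1"] i2 n by simp
      then have si: "sub i \<in> {1..2^(n-1) - 1}" using sub_ge1[of i] by auto
      show ?thesis
      proof (cases "isR i")
        case True
        then show ?thesis using int2[rule_format, OF si] i2
          by (simp add: X_def Y_def T_def U_def V_def comb_def sub_dbl')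
      next
        case False
        then show ?thesis using int1[rule_format, OF si] i2
          by (simp add: X_def Y_def T_def U_def V_def comb_def sub_dbl')
      qed
    qed
  qed
  have lv: "\<forall>i\<in>{2^(Suc n - 1)..2^(Suc n) - 1}. U i \<in> H \<and> rmul mult (V i) (X i) \<in> H"
  proof
    fix i :: nat assume i: "i \<in> {2^(Suc n - 1)..2^(Suc n) - 1}"
    have a: "2^n \<le> i" "i \<le> 2*2^n - 1" using i by auto
    have b: "(2::nat) \<le> 2^n" using n by (simp add: self_le_power)
    have i2: "2 \<le> i" "2^n \<le> i" "i < 2^(Suc n)"
      using a b by (linarith, linarith, simp)
    have "2^(n-1) \<le> sub i" using sub_lower[of i "n-1"] i2 n by simp
    moreover have "sub i < 2^n" using sub_upper[of i n] i2 by simp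
    ultimately have si: "sub i \<in> {2^(n-1)..2^n - 1}" by auto
    show "U i \<in> H \<and> rmul mult (V i) (X i) \<in> H"
      using lv1[rule_format, OF si] lv2[rule_format, OF si] i2
      by (simp add: X_def Y_def T_def U_def V_def comb_simps)
  qed
  have root: "(U 1, V 1) \<in> xi"
    "boxdot_le mult meet delta (rmul mult (meet (U 1) (V 1)) (X 1)) (Y 1) (rmul mult z (T 1))"
    using r0 b0 by (simp_all add: X_def Y_def T_def U_def V_def comb_simps)
  show ?thesis unfolding XX_def
    apply (rule exI[of _ X], rule exI[of _ Y], rule exI[of _ T], rule exI[of _ U], rule exI[of _ V])
    using mem int lv root by blast
qed



locale alg4 = alg + assumes ax: "axioms_1_to_4 G mult meet xi delta"
begin

lemmas ax' = ax[unfolded axioms_1_to_4_def]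
lemmas ax1 = ax'[THEN conjunct1]
lemmas ax2 = ax'[THEN conjunct2, THEN conjunct1]
lemmas ax3 = ax'[THEN conjunct2, THEN conjunct2, THEN conjunct1]
lemmas ax4 = ax'[THEN conjunct2, THEN conjunct2, THEN conjunct2, THEN conjunct1]
lemmas ax5 = ax'[THEN conjunct2, THEN conjunct2, THEN conjunct2, THEN conjunct2, THEN conjunct1]
lemmas ax6 = ax'[THEN conjunct2, THEN conjunct2, THEN conjunct2, THEN conjunct2, THEN conjunct2, THEN conjunct1]
lemmas ax7 = ax'[THEN conjunct2, THEN conjunct2, THEN conjunct2, THEN conjunct2, THEN conjunct2, THEN conjunct2]

lemma lreg: "x\<in>G \<Longrightarrow> u\<in>G \<Longrightarrow> v\<in>G \<Longrightarrow> (u,v)\<in>xi \<Longrightarrow> (mult x u, mult x v) \<in> xi"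
  using ax1 by blast
lemma zeta_xi: "x\<in>G \<Longrightarrow> y\<in>G \<Longrightarrow> meet x y = x \<Longrightarrow> (x,y) \<in> xi"
  using ax2 unfolding zeta_def sl_le_def by blast
lemma dleft: "x\<in>G \<Longrightarrow> y\<in>G \<Longrightarrow> u\<in>G \<Longrightarrow> (x,y)\<in>delta \<Longrightarrow> (mult u x, y) \<in> delta"
  using ax3 by blast
lemma distl: "x\<in>G \<Longrightarrow> y\<in>G \<Longrightarrow> z\<in>G \<Longrightarrow> mult x (meet y z) = meet (mult x y) (mult x z)"
  using ax4 by blast
lemma ax3b: "x\<in>G \<Longrightarrow> y\<in>G \<Longrightarrow> u\<in>G \<Longrightarrow> v\<in>G \<Longrightarrow> meet x y = x \<Longrightarrow> meet u v = u \<Longrightarrow> (y,v)\<in>xi \<Longrightarrow> (u,x)\<in>xi"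
  using ax5 unfolding sl_le_def by blast
lemma distr: "x\<in>G \<Longrightarrow> y\<in>G \<Longrightarrow> u\<in>G \<Longrightarrow> (x,y)\<in>xi \<Longrightarrow> mult (meet x y) u = meet (mult x u) (mult y u)"
  using ax6 by blast
lemma axA: "n \<ge> 1 \<Longrightarrow> x\<in>G \<Longrightarrow> y\<in>G \<Longrightarrow> XX G mult meet xi delta n (meet x y) {x} \<Longrightarrow> meet x y = x"
  using ax7 by blast
lemma axB: "n \<ge> 1 \<Longrightarrow> x\<in>G \<Longrightarrow> y\<in>G \<Longrightarrow> XX G mult meet xi delta n (meet x y) {x,y} \<Longrightarrow> (x,y) \<in> xi"
  using ax7 by blast
lemma axC: "n \<ge> 1 \<Longrightarrow> x\<in>G \<Longrightarrow> y\<in>G \<Longrightarrow> XX G mult meet xi delta n (mult x y) {x} \<Longrightarrow> (x,y) \<in> delta"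
  using ax7 by blast

lemma xi_refl: "x\<in>G \<Longrightarrow> (x,x) \<in> xi" using zeta_xi by simp

lemma None_Gstar[simp]: "None \<in> Gstar G" by (simp add: Gstar_def)
lemma Some_Gstar[simp]: "Some b \<in> Gstar G \<longleftrightarrow> b \<in> G" by (auto simp: Gstar_def)
lemma rmul_None[simp]: "rmul mult w None = w" by (simp add: rmul_def)
lemma rmul_Some[simp]: "rmul mult w (Some s) = mult w s" by (simp add: rmul_def)

lemma XX_base: "w \<in> H \<Longrightarrow> w \<in> G \<Longrightarrow> XX G mult meet xi delta 1 w H"
  unfolding XX_def
  apply (rule exI[of _ "\<lambda>_. None"], rule exI[of _ "\<lambda>_. None"], rule exI[of _ "\<lambda>_. None"],
         rule exI[of _ "\<lambda>_. w"], rule exI[of _ "\<lambda>_. w"])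
  by (simp add: xi_refl boxdot_le_def dstar_def sl_le_def)

lemma XX_mono1: "n \<ge> 1 \<Longrightarrow> z \<in> G \<Longrightarrow> XX G mult meet xi delta n z H \<Longrightarrow> XX G mult meet xi delta (Suc n) z H"
  by (rule graft[of n _ _ _ _ _ z H z None None None]) (simp_all add: xi_refl boxdot_le_def dstar_def sl_le_def)

lemma XX_mono: "n \<ge> 1 \<Longrightarrow> z \<in> G \<Longrightarrow> XX G mult meet xi delta n z H \<Longrightarrow> XX G mult meet xi delta (n + k) z H"
  by (induction k) (auto intro: XX_mono1)

inductive Der :: "'a set \<Rightarrow> 'a \<Rightarrow> bool" for H where
  base: "w \<in> H \<Longrightarrow> w \<in> G \<Longrightarrow> Der H w"
| step: "u\<in>G \<Longrightarrow> v\<in>G \<Longrightarrow> x \<in> Gstar G \<Longrightarrow> y \<in> Gstar G \<Longrightarrow> t \<in> Gstar G \<Longrightarrow> z \<in> G \<Longrightarrow>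
    (u,v)\<in>xi \<Longrightarrow> boxdot_le mult meet delta (rmul mult (meet u v) x) y (rmul mult z t) \<Longrightarrow>
    Der H u \<Longrightarrow> Der H (rmul mult v x) \<Longrightarrow> Der H z"

lemma Der_G: "Der H z \<Longrightarrow> z \<in> G"
  by (induction rule: Der.induct) auto

lemma Der_XX: "Der H z \<Longrightarrow> \<exists>n\<ge>1. XX G mult meet xi delta n z H"
proof (induction rule: Der.induct)
  case (base w)
  then show ?case using XX_base by (intro exI[of _ 1] conjI) simp_all
next
  case (step u v x y t z)
  from step.IH obtain n1 n2 where n: "n1 \<ge> 1" "n2 \<ge> 1" and X1: "XX G mult meet xi delta n1 u H"
    and X2: "XX G mult meet xi delta n2 (rmul mult v x) H" by blast
  let ?m = "max n1 n2"
  have "XX G mult meet xi delta (n1 + (?m - n1)) u H"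
    using XX_mono[OF n(1) _ X1] step.hyps by blast
  then have Y1: "XX G mult meet xi delta ?m u H" by simp
  have "XX G mult meet xi delta (n2 + (?m - n2)) (rmul mult v x) H"
    using XX_mono[OF n(2) _ X2] step.hyps rmul_closed by blast
  then have Y2: "XX G mult meet xi delta ?m (rmul mult v x) H" by simp
  have "XX G mult meet xi delta (Suc ?m) z H"
    by (rule graft[OF _ Y1 Y2 step.hyps(1,2,3,4,5,7,8)]) (use n in simp)
  moreover have "1 \<le> Suc ?m" by simp
  ultimately show ?case by blast
qed

end


context alg4 begin

lemma meet_absorb1: "a\<in>G \<Longrightarrow> b\<in>G \<Longrightarrow> meet (meet a b) a = meet a b"
  by (metis meet_assoc meet_comm meet_idem)
lemma meet_absorb2: "a\<in>G \<Longrightarrow> b\<in>G \<Longrightarrow> meet (meet a b) b = meet a b"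
  by (metis meet_assoc meet_idem)
lemma meet_left_comm: "a\<in>G \<Longrightarrow> b\<in>G \<Longrightarrow> c\<in>G \<Longrightarrow> meet a (meet b c) = meet b (meet a c)"
  by (metis meet_assoc meet_comm)

lemma R1: "Der H u \<Longrightarrow> Der H v \<Longrightarrow> (u,v)\<in>xi \<Longrightarrow> meet (meet u v) z = meet u v \<Longrightarrow> z \<in> G \<Longrightarrow> Der H z"
  apply (rule Der.step[where x=None and y=None and t=None and u=u and v=v])
  by (auto simp: Der_G boxdot_le_def dstar_def sl_le_def)

lemma Rprod: "w\<in>G \<Longrightarrow> g\<in>G \<Longrightarrow> Der H (mult w g) \<Longrightarrow> Der H w"
  apply (rule Der.step[where x=None and y=None and t="Some g" and u="mult w g" and v="mult w g"])
  by (auto simp: Der_G boxdot_le_def dstar_def sl_le_def xi_refl)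

lemma Rdelta: "Der H w \<Longrightarrow> (w,g)\<in>delta \<Longrightarrow> g\<in>G \<Longrightarrow> Der H (mult w g)"
  apply (rule Der.step[where x=None and y="Some g" and t=None and u=w and v=w])
  by (auto simp: Der_G boxdot_le_def dstar_def sl_le_def xi_refl)

lemma Rmeet1: "w\<in>G \<Longrightarrow> w'\<in>G \<Longrightarrow> Der H (meet w w') \<Longrightarrow> Der H w"
  by (rule R1[where u="meet w w'" and v="meet w w'"]) (auto simp: xi_refl meet_absorb1)

lemma Rmeet2: "w\<in>G \<Longrightarrow> w'\<in>G \<Longrightarrow> Der H (meet w w') \<Longrightarrow> Der H w'"
  by (rule R1[where u="meet w w'" and v="meet w w'"]) (auto simp: xi_refl meet_absorb2)

lemma Rtrans: assumes G: "b\<in>G" "c\<in>G" "d\<in>G" and D: "Der H (meet b c)" "Der H (meet c d)"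
  shows "Der H (meet b d)"
proof (rule R1[OF D])
  show "(meet b c, meet c d) \<in> xi"
    by (rule ax3b[where y=c and v=c]) (use G in \<open>auto simp: xi_refl meet_absorb1 meet_absorb2\<close>)
  have "meet (meet b c) (meet c d) = meet b (meet c d)"
    using G by (metis meet_assoc meet_closed meet_idem)
  moreover have "meet (meet b (meet c d)) (meet b d) = meet b (meet c d)"
    using G by (metis meet_assoc meet_closed meet_comm meet_idem meet_left_comm)
  ultimately show "meet (meet (meet b c) (meet c d)) (meet b d) = meet (meet b c) (meet c d)" by simp
qed (use G in simp)

lemma Rsym: "b\<in>G \<Longrightarrow> c\<in>G \<Longrightarrow> Der H (meet b c) \<Longrightarrow> Der H (meet c b)"
  by (simp add: meet_comm)

lemma Lmult: assumes "b\<in>G" "b'\<in>G" "g\<in>G"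
  shows "meet (mult (meet b b') g) (mult b' g) = mult (meet b b') g"
proof -
  have "(meet b b', b') \<in> xi" using assms by (simp add: zeta_xi meet_absorb2)
  then have "mult (meet (meet b b') b') g = meet (mult (meet b b') g) (mult b' g)"
    using assms by (simp add: distr)
  then show ?thesis using assms by (simp add: meet_absorb2)
qed

lemma W1: assumes G: "b\<in>G" "b'\<in>G" "g\<in>G" and D: "Der H (meet b b')" "Der H (mult b g)"
  shows "Der H (mult b' g)"
  apply (rule Der.step[where u="meet b b'" and v=b and x="Some g" and y=None and t=None])
  using G D by (auto simp: boxdot_le_def dstar_def sl_le_def zeta_xi meet_absorb1 Lmult)

lemma W2: assumes G: "b\<in>G" "b'\<in>G" "g\<in>G" and D: "Der H (meet b b')" "Der H (mult b g)"
  shows "Der H (meet (mult b g) (mult b' g))"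
proof (rule Der.step[where u="meet b b'" and v=b and x="Some g" and y=None and t=None])
  let ?m = "mult (meet b b') g"
  have 1: "meet ?m (mult b' g) = ?m" using G Lmult by simp
  have 2: "meet ?m (mult b g) = ?m" using G Lmult[of b' b g] meet_comm[of b b'] by simp
  have "meet ?m (meet (mult b g) (mult b' g)) = ?m"
    using 1 2 G by (metis meet_assoc mult_closed meet_closed)
  then show "boxdot_le mult meet delta (rmul mult (meet (meet b b') b) (Some g)) None
     (rmul mult (meet (mult b g) (mult b' g)) None)"
    using G by (simp add: boxdot_le_def dstar_def sl_le_def meet_absorb1)
qed (use G D in \<open>auto simp: zeta_xi meet_absorb1\<close>)

definition ap :: "'a option \<Rightarrow> 'a \<Rightarrow> 'a" where
  "ap a g = (case a of None \<Rightarrow> g | Some b \<Rightarrow> mult b g)"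

lemma ap_simps[simp]: "ap None g = g" "ap (Some b) g = mult b g"
  by (simp_all add: ap_def)

lemma ap_closed[simp]: "a \<in> Gstar G \<Longrightarrow> g \<in> G \<Longrightarrow> ap a g \<in> G"
  by (auto simp: Gstar_def)

lemma ap_mult: "a \<in> Gstar G \<Longrightarrow> x\<in>G \<Longrightarrow> y\<in>G \<Longrightarrow> ap (Some (ap a x)) y = ap a (mult x y)"
  by (auto simp: Gstar_def mult_assoc)

lemma ap_meet: "a \<in> Gstar G \<Longrightarrow> x\<in>G \<Longrightarrow> y\<in>G \<Longrightarrow> ap a (meet x y) = meet (ap a x) (ap a y)"
  by (auto simp: Gstar_def distl)

lemma Rleft: assumes "(x,y)\<in>xi" "x\<in>G" "y\<in>G" "a \<in> Gstar G" "Der H (ap a x)" "Der H (ap a y)"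
  shows "Der H (meet (ap a x) (ap a y))"
proof (rule R1[OF assms(5,6)])
  show "(ap a x, ap a y) \<in> xi" using assms(1-4) by (auto simp: Gstar_def lreg)
qed (use assms in auto)

end


context alg4 begin

definition DD :: "'a set \<Rightarrow> 'a option \<Rightarrow> bool" where
  "DD H a = (case a of None \<Rightarrow> True | Some b \<Rightarrow> Der H b)"
definition EE :: "'a set \<Rightarrow> 'a option \<Rightarrow> 'a option \<Rightarrow> bool" where
  "EE H a a' = (case a of None \<Rightarrow> a' = None | Some b \<Rightarrow> (case a' of None \<Rightarrow> False | Some b' \<Rightarrow> Der H (meet b b')))"
definition rep :: "'a set \<Rightarrow> 'a \<Rightarrow> 'a" where
  "rep H b = (SOME c. c \<in> G \<and> Der H (meet b c))"
definition pt :: "'a \<Rightarrow> 'a \<Rightarrow> 'a option \<Rightarrow> 'a \<times> 'a \<times> 'a option" where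
  "pt p q a = (p, q, map_option (rep {p,q}) a)"
definition valid :: "'a \<Rightarrow> 'a \<Rightarrow> 'a option \<Rightarrow> bool" where
  "valid p q a \<longleftrightarrow> p \<in> G \<and> q \<in> G \<and> a \<in> Gstar G \<and> DD {p,q} a"

lemma DD_simps[simp]: "DD H None" "DD H (Some b) = Der H b" by (simp_all add: DD_def)
lemma EE_simps[simp]: "EE H None a' = (a' = None)" "EE H (Some b) None = False"
  "EE H (Some b) (Some b') = Der H (meet b b')" by (simp_all add: EE_def)

lemma rep_prop: "b \<in> G \<Longrightarrow> Der H b \<Longrightarrow> rep H b \<in> G \<and> Der H (meet b (rep H b))"
  unfolding rep_def by (rule someI[of _ b]) simp

lemma rep_eq: assumes "b\<in>G" "b'\<in>G" "Der H (meet b b')" shows "rep H b = rep H b'"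
proof -
  have "(\<lambda>c. c\<in>G \<and> Der H (meet b c)) = (\<lambda>c. c\<in>G \<and> Der H (meet b' c))"
  proof (rule ext, rule iffI)
    fix c assume c: "c\<in>G \<and> Der H (meet b c)"
    then show "c\<in>G \<and> Der H (meet b' c)" using Rtrans[of b' b c H] Rsym[of b b' H] assms by blast
  next
    fix c assume c: "c\<in>G \<and> Der H (meet b' c)"
    then show "c\<in>G \<and> Der H (meet b c)" using Rtrans[of b b' c H] assms by blast
  qed
  then show ?thesis unfolding rep_def by simp
qed

lemma rep_eqD: assumes "b\<in>G" "b'\<in>G" "Der H b" "Der H b'" "rep H b = rep H b'" shows "Der H (meet b b')"
proof -
  have r: "rep H b \<in> G" "Der H (meet b (rep H b))" using rep_prop[OF assms(1,3)] by auto
  have "Der H (meet b' (rep H b))" using rep_prop[OF assms(2,4)] assms(5) by simp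
  then have "Der H (meet (rep H b) b')" using Rsym r assms by blast
  then show ?thesis using Rtrans[of b "rep H b" b' H] r assms by blast
qed

lemma pt_eq_iff: "pt p q a = pt p' q' a' \<longleftrightarrow> p = p' \<and> q = q' \<and> map_option (rep {p,q}) a = map_option (rep {p,q}) a'"
  unfolding pt_def by auto

lemma K: assumes "valid p q a" "valid p q a'"
  shows "pt p q a = pt p q a' \<longleftrightarrow> EE {p,q} a a'"
proof (cases a)
  case None then show ?thesis by (cases a') (auto simp: pt_def)
next
  case (Some b)
  show ?thesis
  proof (cases a')
    case None then show ?thesis using Some by (auto simp: pt_def)
  next
    case (Some b')
    have G: "b\<in>G" "b'\<in>G" "Der {p,q} b" "Der {p,q} b'" using assms \<open>a = Some b\<close> Some by (auto simp: valid_def)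
    show ?thesis using \<open>a = Some b\<close> Some rep_eq[OF G(1,2)] rep_eqD[OF G] by (auto simp: pt_def)
  qed
qed

lemma EE_sym: "a \<in> Gstar G \<Longrightarrow> a' \<in> Gstar G \<Longrightarrow> EE H a a' \<Longrightarrow> EE H a' a"
  by (cases a; cases a') (auto simp: Rsym)

lemma KW: assumes "EE H a a'" "a \<in> Gstar G" "a' \<in> Gstar G" "DD H a" "DD H a'" "g\<in>G" "Der H (ap a g)"
  shows "Der H (ap a' g) \<and> Der H (meet (ap a g) (ap a' g))"
proof (cases a)
  case None then show ?thesis using assms by simp
next
  case (Some b)
  then obtain b' where b': "a' = Some b'" using assms(1) by (cases a') auto
  show ?thesis using W1[of b b' g H] W2[of b b' g H] assms Some b' by auto
qed

definition h0 :: "'a \<Rightarrow> (('a \<times> 'a \<times> 'a option) \<times> ('a \<times> 'a \<times> 'a option)) set" where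
  "h0 g = {(pt p q a, pt p q (Some (ap a g))) | p q a. valid p q a \<and> Der {p,q} (ap a g)}"
definition A0 :: "('a \<times> 'a \<times> 'a option) set" where
  "A0 = {pt p q a | p q a. valid p q a}"

lemma h0_memD: "(P,R) \<in> h0 g \<Longrightarrow> \<exists>p q a. P = pt p q a \<and> valid p q a"
  unfolding h0_def by blast

lemma h0_at: assumes v: "valid p q a" and g: "g \<in> G"
  shows "(pt p q a, R) \<in> h0 g \<longleftrightarrow> Der {p,q} (ap a g) \<and> R = pt p q (Some (ap a g))"
proof
  assume "Der {p,q} (ap a g) \<and> R = pt p q (Some (ap a g))"
  then show "(pt p q a, R) \<in> h0 g" using v unfolding h0_def by blast
next
  assume "(pt p q a, R) \<in> h0 g"
  then obtain p' q' a' where e: "pt p q a = pt p' q' a'" and R: "R = pt p' q' (Some (ap a' g))"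
    and v': "valid p' q' a'" and d': "Der {p',q'} (ap a' g)"
    unfolding h0_def by blast
  have pq: "p' = p" "q' = q" using e by (auto simp: pt_def)
  have v'': "valid p q a'" using v' pq by simp
  have "EE {p,q} a' a" using K[OF v'' v] e pq by simp
  then have kw: "Der {p,q} (ap a g) \<and> Der {p,q} (meet (ap a' g) (ap a g))"
    using KW[of "{p,q}" a' a g] v v'' g d' pq by (auto simp: valid_def)
  have "valid p q (Some (ap a' g))" "valid p q (Some (ap a g))"
    using v v'' g kw d' pq by (auto simp: valid_def)
  then have "pt p q (Some (ap a' g)) = pt p q (Some (ap a g))"
    using K kw by simp
  then show "Der {p,q} (ap a g) \<and> R = pt p q (Some (ap a g))" using kw R pq by simp
qed

lemma valid_Some: "valid p q a \<Longrightarrow> g \<in> G \<Longrightarrow> Der {p,q} (ap a g) \<Longrightarrow> valid p q (Some (ap a g))"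
  by (auto simp: valid_def)

lemma h0_sub: "g \<in> G \<Longrightarrow> h0 g \<subseteq> A0 \<times> A0"
proof
  fix z assume g: "g\<in>G" and z: "z \<in> h0 g"
  obtain P R where zz: "z = (P,R)" by (cases z)
  obtain p q a where P: "P = pt p q a" "valid p q a" using h0_memD z zz by blast
  then have "Der {p,q} (ap a g) \<and> R = pt p q (Some (ap a g))" using h0_at g z zz by blast
  then show "z \<in> A0 \<times> A0" using zz P valid_Some[OF P(2) g] unfolding A0_def by blast
qed

lemma h0_sv: assumes g: "g \<in> G" shows "single_valued (h0 g)"
  unfolding single_valued_def
proof (intro allI impI)
  fix P R R' assume PR: "(P,R)\<in>h0 g" and PR': "(P,R')\<in>h0 g"
  obtain p q a where P: "P = pt p q a" "valid p q a" using h0_memD PR by blast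
  show "R = R'" using h0_at[OF P(2) g] PR PR' P by simp
qed

lemma h0_comp: assumes x: "x\<in>G" and y: "y\<in>G" shows "h0 x O h0 y = h0 (mult x y)"
proof (rule set_eqI)
  fix z :: "('a \<times> 'a \<times> 'a option) \<times> ('a \<times> 'a \<times> 'a option)"
  obtain P R where zz: "z = (P,R)" by (cases z)
  show "z \<in> h0 x O h0 y \<longleftrightarrow> z \<in> h0 (mult x y)"
  proof
    assume "z \<in> h0 x O h0 y"
    then obtain Q where PQ: "(P,Q) \<in> h0 x" and QR: "(Q,R) \<in> h0 y" using zz by blast
    obtain p q a where P: "P = pt p q a" "valid p q a" using h0_memD PQ by blast
    have 1: "Der {p,q} (ap a x)" "Q = pt p q (Some (ap a x))" using h0_at[OF P(2) x] PQ P by auto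
    have v1: "valid p q (Some (ap a x))" using valid_Some[OF P(2) x 1(1)] .
    have 2: "Der {p,q} (ap (Some (ap a x)) y)" "R = pt p q (Some (ap (Some (ap a x)) y))"
      using h0_at[OF v1 y] QR 1 by auto
    have am: "ap (Some (ap a x)) y = ap a (mult x y)" using ap_mult P x y by (simp add: valid_def)
    show "z \<in> h0 (mult x y)" using h0_at[OF P(2)] 2 am zz P x y by simp
  next
    assume "z \<in> h0 (mult x y)"
    then have PR: "(P,R) \<in> h0 (mult x y)" using zz by simp
    obtain p q a where P: "P = pt p q a" "valid p q a" using h0_memD PR by blast
    have aG: "a \<in> Gstar G" using P by (simp add: valid_def)
    have 1: "Der {p,q} (ap a (mult x y))" "R = pt p q (Some (ap a (mult x y)))"
      using h0_at[OF P(2)] PR P x y by auto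
    have am: "ap (Some (ap a x)) y = ap a (mult x y)" using ap_mult aG x y by simp
    have d1: "Der {p,q} (ap a x)" using Rprod[of "ap a x" y] 1 am aG x y by simp
    have v1: "valid p q (Some (ap a x))" using valid_Some[OF P(2) x d1] .
    have "(P, pt p q (Some (ap a x))) \<in> h0 x" using h0_at[OF P(2) x] d1 P by simp
    moreover have "(pt p q (Some (ap a x)), R) \<in> h0 y" using h0_at[OF v1 y] 1 am by simp
    ultimately show "z \<in> h0 x O h0 y" using zz by blast
  qed
qed

lemma h0_meet: assumes x: "x\<in>G" and y: "y\<in>G" shows "h0 x \<inter> h0 y = h0 (meet x y)"
proof (rule set_eqI)
  have xy: "meet x y \<in> G" using x y by simp
  fix z :: "('a \<times> 'a \<times> 'a option) \<times> ('a \<times> 'a \<times> 'a option)"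
  obtain P R where zz: "z = (P,R)" by (cases z)
  have abs1: "meet (ap a (meet x y)) (ap a x) = ap a (meet x y)"
    and abs2: "meet (ap a (meet x y)) (ap a y) = ap a (meet x y)" if aG: "a \<in> Gstar G" for a
  proof -
    have m: "ap a (meet x y) = meet (ap a x) (ap a y)" using ap_meet[OF aG x y] .
    show "meet (ap a (meet x y)) (ap a x) = ap a (meet x y)"
      unfolding m using meet_absorb1[of "ap a x" "ap a y"] aG x y by simp
    show "meet (ap a (meet x y)) (ap a y) = ap a (meet x y)"
      unfolding m using meet_absorb2[of "ap a x" "ap a y"] aG x y by simp
  qed
  show "z \<in> h0 x \<inter> h0 y \<longleftrightarrow> z \<in> h0 (meet x y)"
  proof
    assume "z \<in> h0 x \<inter> h0 y"
    then have PR: "(P,R) \<in> h0 x" "(P,R) \<in> h0 y" using zz by auto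
    obtain p q a where P: "P = pt p q a" "valid p q a" using h0_memD PR by blast
    have aG: "a \<in> Gstar G" using P by (simp add: valid_def)
    have 1: "Der {p,q} (ap a x)" "R = pt p q (Some (ap a x))" using h0_at[OF P(2) x] PR(1) P(1) by auto
    have 2: "Der {p,q} (ap a y)" "R = pt p q (Some (ap a y))" using h0_at[OF P(2) y] PR(2) P(1) by auto
    have vx: "valid p q (Some (ap a x))" using valid_Some[OF P(2) x 1(1)] .
    have vy: "valid p q (Some (ap a y))" using valid_Some[OF P(2) y 2(1)] .
    have "pt p q (Some (ap a x)) = pt p q (Some (ap a y))" using 1(2) 2(2) by simp
    then have "EE {p,q} (Some (ap a x)) (Some (ap a y))" using K[OF vx vy] by simp
    then have "Der {p,q} (meet (ap a x) (ap a y))" by simp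
    then have d: "Der {p,q} (ap a (meet x y))" using ap_meet[OF aG x y] by simp
    have vm: "valid p q (Some (ap a (meet x y)))" using valid_Some[OF P(2) xy d] .
    have "EE {p,q} (Some (ap a (meet x y))) (Some (ap a x))"
      using d abs1[OF aG] by simp
    then have "pt p q (Some (ap a (meet x y))) = R"
      using K[OF vm vx] 1(2) by simp
    then have "(P,R) \<in> h0 (meet x y)" using h0_at[OF P(2) xy] d P(1) by simp
    then show "z \<in> h0 (meet x y)" using zz by simp
  next
    assume "z \<in> h0 (meet x y)"
    then have PR: "(P,R) \<in> h0 (meet x y)" using zz by simp
    obtain p q a where P: "P = pt p q a" "valid p q a" using h0_memD PR by blast
    have aG: "a \<in> Gstar G" using P by (simp add: valid_def)
    have 1: "Der {p,q} (ap a (meet x y))" "R = pt p q (Some (ap a (meet x y)))"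
      using h0_at[OF P(2) xy] PR P(1) by auto
    have dm: "Der {p,q} (meet (ap a x) (ap a y))" using 1(1) ap_meet[OF aG x y] by simp
    have dx: "Der {p,q} (ap a x)" using Rmeet1[OF _ _ dm] aG x y by simp
    have dy: "Der {p,q} (ap a y)" using Rmeet2[OF _ _ dm] aG x y by simp
    have vm: "valid p q (Some (ap a (meet x y)))" using valid_Some[OF P(2) xy 1(1)] .
    have vx: "valid p q (Some (ap a x))" using valid_Some[OF P(2) x dx] .
    have vy: "valid p q (Some (ap a y))" using valid_Some[OF P(2) y dy] .
    have "EE {p,q} (Some (ap a (meet x y))) (Some (ap a x))"
      using 1(1) abs1[OF aG] by simp
    then have ex: "R = pt p q (Some (ap a x))"
      using K[OF vm vx] 1(2) by simp
    have "EE {p,q} (Some (ap a (meet x y))) (Some (ap a y))"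
      using 1(1) abs2[OF aG] by simp
    then have ey: "R = pt p q (Some (ap a y))"
      using K[OF vm vy] 1(2) by simp
    have "(P,R) \<in> h0 x" using h0_at[OF P(2) x] dx ex P(1) by simp
    moreover have "(P,R) \<in> h0 y" using h0_at[OF P(2) y] dy ey P(1) by simp
    ultimately show "z \<in> h0 x \<inter> h0 y" using zz by simp
  qed
qed

lemma valid_base: "p\<in>G \<Longrightarrow> q\<in>G \<Longrightarrow> valid p q None" by (simp add: valid_def)

lemma h0_inj: assumes x: "x\<in>G" and y: "y\<in>G" and e: "h0 x = h0 y" shows "x = y"
proof -
  have le: "meet u w = u" if u: "u\<in>G" and w: "w\<in>G" and e: "h0 u = h0 w" for u w
  proof -
    have v: "valid u u None" using valid_base u by simp
    have du: "Der {u,u} u" using Der.base u by simp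
    have "(pt u u None, pt u u (Some u)) \<in> h0 u" using h0_at[OF v u] du by simp
    then have "(pt u u None, pt u u (Some u)) \<in> h0 w" using e by simp
    then have dw: "Der {u,u} w" "pt u u (Some u) = pt u u (Some w)" using h0_at[OF v w] by auto
    have "EE {u,u} (Some u) (Some w)"
      using K[of u u "Some u" "Some w"] dw du u w by (simp add: valid_def)
    then have "Der {u} (meet u w)" by simp
    then obtain n where "n\<ge>1" "XX G mult meet xi delta n (meet u w) {u}" using Der_XX by blast
    then show ?thesis using axA u w by blast
  qed
  have "meet x y = x" using le[OF x y e] .
  moreover have "meet y x = y" using le[OF y x e[symmetric]] .
  ultimately show ?thesis using meet_comm[OF x y] by simp
qed

lemma h0_xi: assumes x: "x\<in>G" and y: "y\<in>G"
  shows "(x,y) \<in> xi \<longleftrightarrow> (\<forall>P R R'. (P,R) \<in> h0 x \<longrightarrow> (P,R') \<in> h0 y \<longrightarrow> R = R')"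
proof
  assume xy: "(x,y) \<in> xi"
  show "\<forall>P R R'. (P,R) \<in> h0 x \<longrightarrow> (P,R') \<in> h0 y \<longrightarrow> R = R'"
  proof (intro allI impI)
    fix P R R' assume PR: "(P,R) \<in> h0 x" and PR': "(P,R') \<in> h0 y"
    obtain p q a where P: "P = pt p q a" "valid p q a" using h0_memD PR by blast
    have aG: "a \<in> Gstar G" using P by (simp add: valid_def)
    have 1: "Der {p,q} (ap a x)" "R = pt p q (Some (ap a x))" using h0_at[OF P(2) x] PR P by auto
    have 2: "Der {p,q} (ap a y)" "R' = pt p q (Some (ap a y))" using h0_at[OF P(2) y] PR' P by auto
    have "Der {p,q} (meet (ap a x) (ap a y))" using Rleft[OF xy x y aG 1(1) 2(1)] .
    then show "R = R'" using K[OF valid_Some[OF P(2) x 1(1)] valid_Some[OF P(2) y 2(1)]] 1 2 by simp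
  qed
next
  assume H: "\<forall>P R R'. (P,R) \<in> h0 x \<longrightarrow> (P,R') \<in> h0 y \<longrightarrow> R = R'"
  have v: "valid x y None" using valid_base x y by simp
  have dx: "Der {x,y} x" and dy: "Der {x,y} y" using Der.base x y by auto
  have "(pt x y None, pt x y (Some x)) \<in> h0 x" using h0_at[OF v x] dx by simp
  moreover have "(pt x y None, pt x y (Some y)) \<in> h0 y" using h0_at[OF v y] dy by simp
  ultimately have "pt x y (Some x) = pt x y (Some y)" using H by blast
  then have "Der {x,y} (meet x y)"
    using K[of x y "Some x" "Some y"] dx dy x y by (simp add: valid_def)
  then obtain n where "n\<ge>1" "XX G mult meet xi delta n (meet x y) {x,y}" using Der_XX by blast
  then show "(x,y) \<in> xi" using axB x y by blast
qed

lemma h0_delta: assumes x: "x\<in>G" and y: "y\<in>G"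
  shows "(x,y) \<in> delta \<longleftrightarrow> Range (h0 x) \<subseteq> Domain (h0 y)"
proof
  assume xy: "(x,y) \<in> delta"
  show "Range (h0 x) \<subseteq> Domain (h0 y)"
  proof
    fix R assume "R \<in> Range (h0 x)"
    then obtain P where PR: "(P,R) \<in> h0 x" by blast
    obtain p q a where P: "P = pt p q a" "valid p q a" using h0_memD PR by blast
    have aG: "a \<in> Gstar G" using P by (simp add: valid_def)
    have 1: "Der {p,q} (ap a x)" "R = pt p q (Some (ap a x))" using h0_at[OF P(2) x] PR P by auto
    have "(ap a x, y) \<in> delta" using xy aG x y by (auto simp: Gstar_def dleft)
    then have d: "Der {p,q} (ap (Some (ap a x)) y)" using Rdelta[OF 1(1)] y by simp
    show "R \<in> Domain (h0 y)" using h0_at[OF valid_Some[OF P(2) x 1(1)] y] d 1 by blast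
  qed
next
  assume H: "Range (h0 x) \<subseteq> Domain (h0 y)"
  have v: "valid x x None" using valid_base x by simp
  have dx: "Der {x,x} x" using Der.base x by simp
  have "(pt x x None, pt x x (Some x)) \<in> h0 x" using h0_at[OF v x] dx by simp
  then have "pt x x (Some x) \<in> Domain (h0 y)" using H by blast
  then obtain R where "(pt x x (Some x), R) \<in> h0 y" by blast
  then have "Der {x,x} (mult x y)"
    using h0_at[OF valid_Some[OF v x] y] dx by simp
  then have "Der {x} (mult x y)" by simp
  then obtain n where "n\<ge>1" "XX G mult meet xi delta n (mult x y) {x}" using Der_XX by blast
  then show "(x,y) \<in> delta" using axC x y by blast
qed

lemma iso0: assumes ne: "G \<noteq> {}"
  shows "is_iso_to_transformative G mult meet xi delta A0 (h0 ` G) h0"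
  unfolding is_iso_to_transformative_def
proof (intro conjI)
  show "cap_semigroup_of_transformations A0 (h0 ` G)"
    unfolding cap_semigroup_of_transformations_def transformation_def
  proof (intro conjI ballI)
    obtain p where p: "p\<in>G" using ne by blast
    then show "A0 \<noteq> {}" unfolding A0_def using valid_base[OF p p] by blast
  next
    fix f assume "f \<in> h0 ` G"
    then obtain g where g: "g\<in>G" "f = h0 g" by blast
    show "f \<subseteq> A0 \<times> A0" using h0_sub g by simp
    show "single_valued f" using h0_sv g by simp
  next
    fix f g assume "f \<in> h0 ` G" "g \<in> h0 ` G"
    then obtain x y where "x\<in>G" "y\<in>G" "f = h0 x" "g = h0 y" by blast
    then show "f O g \<in> h0 ` G" "f \<inter> g \<in> h0 ` G" using h0_comp h0_meet by auto
  qed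
  show "bij_betw h0 G (h0 ` G)" unfolding bij_betw_def inj_on_def using h0_inj by blast
  show "\<forall>x\<in>G. \<forall>y\<in>G.
        h0 (mult x y) = h0 x O h0 y \<and>
        h0 (meet x y) = h0 x \<inter> h0 y \<and>
        ((x, y) \<in> xi \<longleftrightarrow> (h0 x, h0 y) \<in> xi_Phi (h0 ` G)) \<and>
        ((x, y) \<in> delta \<longleftrightarrow> (h0 x, h0 y) \<in> delta_Phi (h0 ` G))"
  proof (intro ballI conjI)
    fix x y assume x: "x\<in>G" and y: "y\<in>G"
    show "h0 (mult x y) = h0 x O h0 y" using h0_comp x y by simp
    show "h0 (meet x y) = h0 x \<inter> h0 y" using h0_meet x y by simp
    show "(x, y) \<in> xi \<longleftrightarrow> (h0 x, h0 y) \<in> xi_Phi (h0 ` G)"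
      unfolding xi_Phi_def using h0_xi[OF x y] x y by blast
    show "(x, y) \<in> delta \<longleftrightarrow> (h0 x, h0 y) \<in> delta_Phi (h0 ` G)"
      unfolding delta_Phi_def using h0_delta[OF x y] x y by blast
  qed
qed

lemma A0_sub: "A0 \<subseteq> G \<times> G \<times> Gstar G"
  unfolding A0_def pt_def valid_def using rep_prop by (auto simp: Gstar_def)

end


context includes cardinal_syntax begin

lemma inj_to_sum_nat:
  fixes G :: "'a set"
  shows "\<exists>f :: 'a \<times> 'a \<times> 'a option \<Rightarrow> 'a + nat. inj_on f (G \<times> G \<times> Gstar G)"
proof (cases "finite G")
  case True
  have "finite (G \<times> G \<times> Gstar G)" using True by (simp add: Gstar_def)
  then obtain g :: "_ \<Rightarrow> nat" and n where "g ` (G \<times> G \<times> Gstar G) = {i. i < n}" "inj_on g (G \<times> G \<times> Gstar G)"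
    using finite_imp_inj_to_nat_seg by blast
  then have "inj_on (Inr \<circ> g) (G \<times> G \<times> Gstar G)" by (simp add: inj_on_def)
  then show ?thesis by blast
next
  case False
  obtain g0 where g0: "g0 \<in> G" using False infinite_imp_nonempty by blast
  have "infinite (G - {g0})" using False by simp
  then obtain g1 where g1: "g1 \<in> G - {g0}" using infinite_imp_nonempty by blast
  have g: "g0 \<in> G" "g1 \<in> G" "g0 \<noteq> g1" using g0 g1 by auto
  define enc where "enc a = (case a of None \<Rightarrow> (g0,g1) | Some b \<Rightarrow> (b,b))" for a
  define e where "e z = (case z of (p,q,a) \<Rightarrow> (p,(q,enc a)))" for z :: "'a \<times> 'a \<times> 'a option"
  have inje: "inj_on e (G \<times> G \<times> Gstar G)"
    unfolding inj_on_def e_def enc_def using g by (auto split: option.splits)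
  have ime: "e ` (G \<times> G \<times> Gstar G) \<subseteq> G \<times> (G \<times> (G \<times> G))"
    unfolding e_def enc_def Gstar_def using g by (auto split: option.splits)
  have co: "Card_order |G|" "\<not> finite (Field |G| )" using card_of_Card_order False by (auto simp: Field_card_of)
  have l0: "|G| \<le>o |G|" using card_of_refl ordIso_iff_ordLeq by blast
  have l1: "|G \<times> G| \<le>o |G|" using card_of_Times_ordLeq_infinite_Field[OF co(2) l0 l0 co(1)] .
  have l2: "|G \<times> (G \<times> G)| \<le>o |G|" using card_of_Times_ordLeq_infinite_Field[OF co(2) l0 l1 co(1)] .
  have l3: "|G \<times> (G \<times> (G \<times> G))| \<le>o |G|" using card_of_Times_ordLeq_infinite_Field[OF co(2) l0 l2 co(1)] .
  then have "\<exists>h. inj_on h (G \<times> (G \<times> (G \<times> G))) \<and> h ` (G \<times> (G \<times> (G \<times> G))) \<subseteq> G"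
    unfolding card_of_ordLeq[symmetric] .
  then obtain h where h: "inj_on h (G \<times> (G \<times> (G \<times> G)))" "h ` (G \<times> (G \<times> (G \<times> G))) \<subseteq> G"
    by blast
  have "inj_on (h \<circ> e) (G \<times> G \<times> Gstar G)"
    by (rule comp_inj_on[OF inje inj_on_subset[OF h(1) ime]])
  then have "inj_on (Inl \<circ> (h \<circ> e)) (G \<times> G \<times> Gstar G)"
    by (rule comp_inj_on) simp
  then show ?thesis by blast
qed

end



lemma transport:
  fixes f :: "'c \<Rightarrow> 'd" and h0 :: "'a \<Rightarrow> ('c \<times> 'c) set"
  assumes iso: "is_iso_to_transformative G mult meet xi delta A0 \<Phi>0 h0" and inj: "inj_on f A0"
  shows "is_iso_to_transformative G mult meet xi delta (f ` A0) ((\<lambda>r. map_prod f f ` r) ` \<Phi>0) (\<lambda>x. map_prod f f ` h0 x)"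
proof -
  define F where "F r = map_prod f f ` r" for r :: "('c \<times> 'c) set"
  have cs: "cap_semigroup_of_transformations A0 \<Phi>0" and bij: "bij_betw h0 G \<Phi>0"
    and hom: "\<forall>x\<in>G. \<forall>y\<in>G.
        h0 (mult x y) = h0 x O h0 y \<and>
        h0 (meet x y) = h0 x \<inter> h0 y \<and>
        ((x, y) \<in> xi \<longleftrightarrow> (h0 x, h0 y) \<in> xi_Phi \<Phi>0) \<and>
        ((x, y) \<in> delta \<longleftrightarrow> (h0 x, h0 y) \<in> delta_Phi \<Phi>0)"
    using iso unfolding is_iso_to_transformative_def by auto
  have sub: "\<And>r. r \<in> \<Phi>0 \<Longrightarrow> r \<subseteq> A0 \<times> A0" and sv: "\<And>r. r \<in> \<Phi>0 \<Longrightarrow> single_valued r"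
    and ne: "A0 \<noteq> {}" and clo: "\<And>r s. r \<in> \<Phi>0 \<Longrightarrow> s \<in> \<Phi>0 \<Longrightarrow> r O s \<in> \<Phi>0 \<and> r \<inter> s \<in> \<Phi>0"
    using cs unfolding cap_semigroup_of_transformations_def transformation_def by auto
  have fi: "\<And>a b. a \<in> A0 \<Longrightarrow> b \<in> A0 \<Longrightarrow> f a = f b \<longleftrightarrow> a = b" using inj inj_on_def by metis
  have memF: "\<And>r a b. r \<subseteq> A0 \<times> A0 \<Longrightarrow> (a, b) \<in> F r \<longleftrightarrow> (\<exists>a' b'. a = f a' \<and> b = f b' \<and> (a',b') \<in> r)"
    unfolding F_def by auto
  have F1: "F (r O s) = F r O F s" if "r \<subseteq> A0 \<times> A0" "s \<subseteq> A0 \<times> A0" for r s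
  proof
    show "F (r O s) \<subseteq> F r O F s" unfolding F_def by auto
    show "F r O F s \<subseteq> F (r O s)"
    proof
      fix z assume "z \<in> F r O F s"
      then obtain a b b' c where z: "z = (f a, f c)" "(a,b)\<in>r" "(b',c)\<in>s" "f b = f b'"
        unfolding F_def by auto
      moreover have "b \<in> A0" "b' \<in> A0" using z that by auto
      ultimately have "b = b'" using inj_onD[OF inj] by blast
      then show "z \<in> F (r O s)" using z unfolding F_def by auto
    qed
  qed
  have F2: "F (r \<inter> s) = F r \<inter> F s" if "r \<subseteq> A0 \<times> A0" "s \<subseteq> A0 \<times> A0" for r s
  proof
    show "F (r \<inter> s) \<subseteq> F r \<inter> F s" unfolding F_def by auto
    show "F r \<inter> F s \<subseteq> F (r \<inter> s)"
    proof
      fix z assume zz: "z \<in> F r \<inter> F s"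
      then obtain a b where z1: "z = (f a, f b)" "(a,b)\<in>r" unfolding F_def by auto
      obtain a' b' where z2: "z = (f a', f b')" "(a',b')\<in>s" using zz unfolding F_def by auto
      note z = z1 z2
      moreover have "a \<in> A0" "b \<in> A0" "a' \<in> A0" "b' \<in> A0" using z that by auto
      ultimately have "a = a'" "b = b'" using inj_onD[OF inj] by auto
      then show "z \<in> F (r \<inter> s)" using z unfolding F_def by auto
    qed
  qed
  have F3: "r = s" if "r \<subseteq> A0 \<times> A0" "s \<subseteq> A0 \<times> A0" "F r = F s" for r s
  proof -
    have "inj_on (map_prod f f) (A0 \<times> A0)" using inj by (simp add: map_prod_inj_on)
    then show ?thesis using that unfolding F_def by (simp add: inj_on_image_eq_iff)
  qed
  have F4: "single_valued (F r)" if "r \<subseteq> A0 \<times> A0" "single_valued r" for r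
    unfolding single_valued_def
  proof (intro allI impI)
    fix x y z assume xy: "(x,y) \<in> F r" and xz: "(x,z) \<in> F r"
    obtain a b where e1: "x = f a" "y = f b" "(a,b)\<in>r" using xy unfolding F_def by auto
    obtain a' b' where e2: "x = f a'" "z = f b'" "(a',b')\<in>r" using xz unfolding F_def by auto
    note e = e1 e2
    moreover have "a \<in> A0" "a' \<in> A0" using e that(1) by auto
    ultimately have "a = a'" using inj_onD[OF inj] by blast
    then show "y = z" using e that(2) unfolding single_valued_def by blast
  qed
  have F5: "F r \<subseteq> f ` A0 \<times> f ` A0" if "r \<subseteq> A0 \<times> A0" for r
    using that unfolding F_def by auto
  have dom: "a \<in> Domain (F r) \<longleftrightarrow> (\<exists>a'. a = f a' \<and> a' \<in> Domain r)" for r a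
    unfolding F_def by force
  have ran: "a \<in> Range (F r) \<longleftrightarrow> (\<exists>a'. a = f a' \<and> a' \<in> Range r)" for r a
    unfolding F_def by force
  have hPhi: "\<And>x. x \<in> G \<Longrightarrow> h0 x \<in> \<Phi>0" using bij unfolding bij_betw_def by auto
  have XI: "(F r, F s) \<in> xi_Phi (F ` \<Phi>0) \<longleftrightarrow> (r, s) \<in> xi_Phi \<Phi>0" if rs: "r \<in> \<Phi>0" "s \<in> \<Phi>0" for r s
  proof -
    have rA: "r \<subseteq> A0 \<times> A0" "s \<subseteq> A0 \<times> A0" using sub rs by auto
    have "(\<forall>a \<in> Domain (F r) \<inter> Domain (F s). \<forall>b c. (a, b) \<in> F r \<longrightarrow> (a, c) \<in> F s \<longrightarrow> b = c)
       \<longleftrightarrow> (\<forall>a \<in> Domain r \<inter> Domain s. \<forall>b c. (a, b) \<in> r \<longrightarrow> (a, c) \<in> s \<longrightarrow> b = c)"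
    proof
      assume H: "\<forall>a \<in> Domain (F r) \<inter> Domain (F s). \<forall>b c. (a, b) \<in> F r \<longrightarrow> (a, c) \<in> F s \<longrightarrow> b = c"
      show "\<forall>a \<in> Domain r \<inter> Domain s. \<forall>b c. (a, b) \<in> r \<longrightarrow> (a, c) \<in> s \<longrightarrow> b = c"
      proof (intro ballI allI impI)
        fix a b c assume "a \<in> Domain r \<inter> Domain s" "(a,b)\<in>r" "(a,c)\<in>s"
        moreover then have "(f a, f b) \<in> F r" "(f a, f c) \<in> F s" unfolding F_def by auto
        ultimately have "f b = f c" using H by blast
        moreover have "b \<in> A0" "c \<in> A0" using rA \<open>(a,b)\<in>r\<close> \<open>(a,c)\<in>s\<close> by auto
        ultimately show "b = c" using inj_onD[OF inj] by blast
      qed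
    next
      assume H: "\<forall>a \<in> Domain r \<inter> Domain s. \<forall>b c. (a, b) \<in> r \<longrightarrow> (a, c) \<in> s \<longrightarrow> b = c"
      show "\<forall>a \<in> Domain (F r) \<inter> Domain (F s). \<forall>b c. (a, b) \<in> F r \<longrightarrow> (a, c) \<in> F s \<longrightarrow> b = c"
      proof (intro ballI allI impI)
        fix a b c assume ab: "(a,b) \<in> F r" and ac: "(a,c) \<in> F s"
        obtain a1 b1 where e1: "a = f a1" "b = f b1" "(a1,b1)\<in>r" using ab unfolding F_def by auto
        obtain a2 c2 where e2: "a = f a2" "c = f c2" "(a2,c2)\<in>s" using ac unfolding F_def by auto
        note e = e1 e2
        moreover have "a1 \<in> A0" "a2 \<in> A0" using e rA by auto
        ultimately have "a1 = a2" using inj_onD[OF inj] by blast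
        then show "b = c" using H e by blast
      qed
    qed
    moreover have "F r \<in> F ` \<Phi>0" "F s \<in> F ` \<Phi>0" using rs by auto
    ultimately show ?thesis unfolding xi_Phi_def using rs by (simp only: mem_Collect_eq case_prod_conv simp_thms)
  qed
  have DE: "(F r, F s) \<in> delta_Phi (F ` \<Phi>0) \<longleftrightarrow> (r, s) \<in> delta_Phi \<Phi>0" if rs: "r \<in> \<Phi>0" "s \<in> \<Phi>0" for r s
  proof -
    have rA: "r \<subseteq> A0 \<times> A0" "s \<subseteq> A0 \<times> A0" using sub rs by auto
    have "Range (F r) \<subseteq> Domain (F s) \<longleftrightarrow> Range r \<subseteq> Domain s"
    proof
      assume H: "Range (F r) \<subseteq> Domain (F s)"
      show "Range r \<subseteq> Domain s"
      proof
        fix b assume "b \<in> Range r"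
        then obtain a where ab: "(a,b) \<in> r" by blast
        then have "(f a, f b) \<in> F r" unfolding F_def by (simp add: image_iff) (metis map_prod_simp)
        then have "f b \<in> Domain (F s)" using H by blast
        then obtain c where "(f b, c) \<in> F s" by blast
        then obtain b' c' where bc: "f b = f b'" "(b',c') \<in> s" unfolding F_def by auto
        have "b \<in> A0" "b' \<in> A0" using ab bc rA by auto
        then have "b = b'" using inj_onD[OF inj bc(1)] by blast
        then show "b \<in> Domain s" using bc by blast
      qed
    next
      assume H: "Range r \<subseteq> Domain s"
      show "Range (F r) \<subseteq> Domain (F s)"
      proof
        fix x assume "x \<in> Range (F r)"
        then obtain y where "(y,x) \<in> F r" by blast
        then obtain a b where ab: "x = f b" "(a,b) \<in> r" unfolding F_def by auto
        then obtain c where "(b,c) \<in> s" using H by blast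
        then have "(f b, f c) \<in> F s" unfolding F_def by (simp add: image_iff) (metis map_prod_simp)
        then show "x \<in> Domain (F s)" using ab by blast
      qed
    qed
    moreover have "F r \<in> F ` \<Phi>0" "F s \<in> F ` \<Phi>0" using rs by auto
    ultimately show ?thesis unfolding delta_Phi_def using rs by (simp only: mem_Collect_eq case_prod_conv simp_thms)
  qed
  show ?thesis unfolding is_iso_to_transformative_def
  proof (intro conjI)
    show "cap_semigroup_of_transformations (f ` A0) ((\<lambda>r. map_prod f f ` r) ` \<Phi>0)"
      unfolding cap_semigroup_of_transformations_def transformation_def F_def[symmetric]
    proof (intro conjI ballI)
      show "f ` A0 \<noteq> {}" using ne by simp
    next
      fix g assume "g \<in> (\<lambda>r. F r) ` \<Phi>0"
      then obtain r where r: "r \<in> \<Phi>0" "g = F r" by blast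
      show "g \<subseteq> f ` A0 \<times> f ` A0" using F5 sub r by simp
      show "single_valued g" using F4 sub sv r by simp
    next
      fix g g' assume "g \<in> (\<lambda>r. F r) ` \<Phi>0" "g' \<in> (\<lambda>r. F r) ` \<Phi>0"
      then obtain r s where r: "r \<in> \<Phi>0" "g = F r" "s \<in> \<Phi>0" "g' = F s" by blast
      show "g O g' \<in> (\<lambda>r. F r) ` \<Phi>0" using F1[OF sub sub] r clo by (metis image_eqI)
      show "g \<inter> g' \<in> (\<lambda>r. F r) ` \<Phi>0" using F2[OF sub sub] r clo by (metis image_eqI)
    qed
    show "bij_betw (\<lambda>x. map_prod f f ` h0 x) G ((\<lambda>r. map_prod f f ` r) ` \<Phi>0)"
      unfolding F_def[symmetric]
    proof -
      have "inj_on F \<Phi>0" unfolding inj_on_def using F3 sub by blast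
      then have "bij_betw F \<Phi>0 (F ` \<Phi>0)" by (simp add: inj_on_imp_bij_betw)
      then show "bij_betw (\<lambda>x. F (h0 x)) G ((\<lambda>r. F r) ` \<Phi>0)"
        using bij_betw_trans[OF bij] by (simp add: comp_def)
    qed
    show "\<forall>x\<in>G. \<forall>y\<in>G.
        map_prod f f ` h0 (mult x y) = map_prod f f ` h0 x O map_prod f f ` h0 y \<and>
        map_prod f f ` h0 (meet x y) = map_prod f f ` h0 x \<inter> map_prod f f ` h0 y \<and>
        ((x, y) \<in> xi \<longleftrightarrow> (map_prod f f ` h0 x, map_prod f f ` h0 y) \<in> xi_Phi ((\<lambda>r. map_prod f f ` r) ` \<Phi>0)) \<and>
        ((x, y) \<in> delta \<longleftrightarrow> (map_prod f f ` h0 x, map_prod f f ` h0 y) \<in> delta_Phi ((\<lambda>r. map_prod f f ` r) ` \<Phi>0))"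
      unfolding F_def[symmetric]
    proof (intro ballI conjI)
      fix x y assume x: "x\<in>G" and y: "y\<in>G"
      have s: "h0 x \<subseteq> A0 \<times> A0" "h0 y \<subseteq> A0 \<times> A0" using sub hPhi x y by auto
      show "F (h0 (mult x y)) = F (h0 x) O F (h0 y)" using hom x y F1[OF s] by simp
      show "F (h0 (meet x y)) = F (h0 x) \<inter> F (h0 y)" using hom x y F2[OF s] by simp
      show "(x, y) \<in> xi \<longleftrightarrow> (F (h0 x), F (h0 y)) \<in> xi_Phi ((\<lambda>r. F r) ` \<Phi>0)"
        using hom x y XI[OF hPhi hPhi] by simp
      show "(x, y) \<in> delta \<longleftrightarrow> (F (h0 x), F (h0 y)) \<in> delta_Phi ((\<lambda>r. F r) ` \<Phi>0)"
        using hom x y DE[OF hPhi hPhi] by simp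
    qed
  qed
qed


theorem theorem2:
  fixes G :: "'a set" and mult meet :: "'a \<Rightarrow> 'a \<Rightarrow> 'a" and xi delta :: "('a \<times> 'a) set"
  assumes "semigroup_on G mult"
    and "semilattice_on G meet"
    and "xi \<subseteq> G \<times> G" and "delta \<subseteq> G \<times> G"
  shows "((\<exists>(A :: 'b set) \<Phi> h. is_iso_to_transformative G mult meet xi delta A \<Phi> h)
           \<longrightarrow> axioms_1_to_4 G mult meet xi delta)
    \<and> ((\<exists>(A :: ('a + nat) set) \<Phi> h. is_iso_to_transformative G mult meet xi delta A \<Phi> h)
           \<longleftrightarrow> axioms_1_to_4 G mult meet xi delta)"
proof -
  interpret alg G mult meet xi delta using assms by unfold_locales
  have S1: "\<And>(A :: 'b set) \<Phi> h. is_iso_to_transformative G mult meet xi delta A \<Phi> h \<Longrightarrow> axioms_1_to_4 G mult meet xi delta"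
    using sound by blast
  have S2: "\<And>(A :: ('a + nat) set) \<Phi> h. is_iso_to_transformative G mult meet xi delta A \<Phi> h \<Longrightarrow> axioms_1_to_4 G mult meet xi delta"
    using sound by blast
  have C: "\<exists>(A :: ('a + nat) set) \<Phi> h. is_iso_to_transformative G mult meet xi delta A \<Phi> h"
    if axm: "axioms_1_to_4 G mult meet xi delta"
  proof (cases "G = {}")
    case True
    have "is_iso_to_transformative G mult meet xi delta {Inr 0 :: 'a + nat} {} (\<lambda>_. {})"
      unfolding is_iso_to_transformative_def cap_semigroup_of_transformations_def bij_betw_def using True by simp
    then show ?thesis by blast
  next
    case False
    interpret alg4 G mult meet xi delta using assms axm by unfold_locales
    obtain f :: "'a \<times> 'a \<times> 'a option \<Rightarrow> 'a + nat" where f: "inj_on f (G \<times> G \<times> Gstar G)"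
      using inj_to_sum_nat by blast
    have "inj_on f A0" using inj_on_subset[OF f A0_sub] .
    then show ?thesis using transport[OF iso0[OF False]] by blast
  qed
  show ?thesis using S1 S2 C by blast
qed

end
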